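(* Provably in $\mathsf{GB}^{+\infty}$, and also provably in $\mathsf{GB}^{-\infty}$: every instance of the replacement scheme whose depth is in $\mathsf{C}_{\mathsf{Most}}$ is deemed true by $\mathsf{T}_{\mathsf{Most}}$, i.e. belongs to $\mathsf{T}_{\mathsf{Most}}$.
   Context: $\mathsf{GB}^{+\infty}=\mathsf{GB}$ (Gödel–Bernays); $\mathsf{GB}^{-\infty}=\mathsf{GB}_{\mathsf{fin}}+\mathsf{TC}$ ($\mathsf{GB}$ with infinity replaced by its negation plus existence of transitive closures). Internally, an instance of the replacement scheme for a formula $\varphi(x,y,z)$ is the sentence: for every $z$, if $\forall x\,\exists!y\,\varphi(x,y,z)$, then for every set $v$ there is a set $w=\{y:\exists x\in v\,\varphi(x,y,z)\}$ (possibly nonstandard $\varphi$). $\omega$ is the class of finite ordinals; $c_a$ is a constant naming $a$; $\mathsf{depth}(\varphi)$ is the length of the longest path in the parsing tree of $\varphi$; $\mathsf{Depth}_k$ is the set of $\mathcal{L}_{\mathsf{ZF}}$-formulas of depth $\le k$. A class $T$ is a $\mathsf{Depth}_k$-truth class over $(V,\in)$ if $T$ consists of sentences obtained by substituting constants $c_a$ into formulas in $\mathsf{Depth}_k$, and for such sentences: $\ulcorner c_a=c_b\urcorner\in T\leftrightarrow a=b$, $\ulcorner c_a\in c_b\urcorner\in T\leftrightarrow a\in b$, $\neg\psi\in T\leftrightarrow\psi\notin T$, $(\psi_1\vee\psi_2)\in T\leftrightarrow(\psi_1\in T\vee\psi_2\in T)$, $\exists v\,\psi(v)\in T\leftrightarrow\exists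 x\,\psi(c_x)\in T$. $\mathsf{C}_{\mathsf{Most}}$ is the class of $k\in\omega$ such that some class is a $\mathsf{Depth}_k$-truth class. $\mathsf{T}_{\mathsf{Most}}(x)$: $x$ is a sentence $\varphi(c_{a_1},\dots,c_{a_n})$ ($\varphi$ an $\mathcal{L}_{\mathsf{ZF}}$-formula) and there exist $p\ge\mathsf{depth}(\varphi)$ and a class $T$ with $x\in T$ and $T$ a $\mathsf{Depth}_p$-truth class. *)

theory Defs
  imports Main
begin

text \<open>
A model of a two-sorted class theory: a type of sets with membership E,
and a type of classes with membership C (set in class).
"Provably in theory T" is rendered, via the completeness theorem, as
"holds in every model of T".
\<close>

definition upair :: "('s \<Rightarrow> 's \<Rightarrow> bool) \<Rightarrow> 's \<Rightarrow> 's \<Rightarrow> 's" where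
  "upair E a b = (THE c. \<forall>x. E x c \<longleftrightarrow> x = a \<or> x = b)"

definition opair :: "('s \<Rightarrow> 's \<Rightarrow> bool) \<Rightarrow> 's \<Rightarrow> 's \<Rightarrow> 's" where
  "opair E a b = upair E (upair E a a) (upair E a b)"

definition emp :: "('s \<Rightarrow> 's \<Rightarrow> bool) \<Rightarrow> 's" where
  "emp E = (THE e. \<forall>x. \<not> E x e)"

definition union2 :: "('s \<Rightarrow> 's \<Rightarrow> bool) \<Rightarrow> 's \<Rightarrow> 's \<Rightarrow> 's" where
  "union2 E a b = (THE c. \<forall>x. E x c \<longleftrightarrow> E x a \<or> E x b)"

definition succ :: "('s \<Rightarrow> 's \<Rightarrow> bool) \<Rightarrow> 's \<Rightarrow> 's" where
  "succ E a = union2 E a (upair E a a)"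

fun num :: "('s \<Rightarrow> 's \<Rightarrow> bool) \<Rightarrow> nat \<Rightarrow> 's" where
  "num E 0 = emp E"
| "num E (Suc k) = succ E (num E k)"

definition subset :: "('s \<Rightarrow> 's \<Rightarrow> bool) \<Rightarrow> 's \<Rightarrow> 's \<Rightarrow> bool" where
  "subset E a b \<longleftrightarrow> (\<forall>x. E x a \<longrightarrow> E x b)"

definition transitive :: "('s \<Rightarrow> 's \<Rightarrow> bool) \<Rightarrow> 's \<Rightarrow> bool" where
  "transitive E a \<longleftrightarrow> (\<forall>x y. E x a \<longrightarrow> E y x \<longrightarrow> E y a)"

definition is_ord :: "('s \<Rightarrow> 's \<Rightarrow> bool) \<Rightarrow> 's \<Rightarrow> bool" where
  "is_ord E a \<longleftrightarrow> transitive E a \<and> (\<forall>x. E x a \<longrightarrow> transitive E x) \<and>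
     (\<forall>x y. E x a \<longrightarrow> E y a \<longrightarrow> E x y \<or> x = y \<or> E y x)"

definition zero_or_succ :: "('s \<Rightarrow> 's \<Rightarrow> bool) \<Rightarrow> 's \<Rightarrow> bool" where
  "zero_or_succ E a \<longleftrightarrow> a = emp E \<or> (\<exists>b. a = succ E b)"

definition is_nat :: "('s \<Rightarrow> 's \<Rightarrow> bool) \<Rightarrow> 's \<Rightarrow> bool" where
  "is_nat E n \<longleftrightarrow> is_ord E n \<and> zero_or_succ E n \<and> (\<forall>x. E x n \<longrightarrow> zero_or_succ E x)"

section \<open>Axioms of GB (two-sorted, without global choice)\<close>

datatype cfm = CMem nat nat | CEq nat nat | CIn nat nat | CNeg cfm | CDisj cfm cfm | CEx cfm

text \<open>Satisfaction of predicative formulas (quantifiers over sets only; free set variables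
  and class parameters), de Bruijn indices for set variables.\<close>
fun csat :: "('s \<Rightarrow> 's \<Rightarrow> bool) \<Rightarrow> ('s \<Rightarrow> 'c \<Rightarrow> bool) \<Rightarrow> (nat \<Rightarrow> 's) \<Rightarrow> (nat \<Rightarrow> 'c) \<Rightarrow> cfm \<Rightarrow> bool" where
  "csat E C s c (CMem i j) = E (s i) (s j)"
| "csat E C s c (CEq i j) = (s i = s j)"
| "csat E C s c (CIn i j) = C (s i) (c j)"
| "csat E C s c (CNeg p) = (\<not> csat E C s c p)"
| "csat E C s c (CDisj p q) = (csat E C s c p \<or> csat E C s c q)"
| "csat E C s c (CEx p) = (\<exists>a. csat E C (case_nat a s) c p)"

definition is_opair :: "('s \<Rightarrow> 's \<Rightarrow> bool) \<Rightarrow> 's \<Rightarrow> 's \<Rightarrow> 's \<Rightarrow> bool" where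
  "is_opair E p x y \<longleftrightarrow> (\<exists>s d. (\<forall>z. E z s \<longleftrightarrow> z = x) \<and> (\<forall>z. E z d \<longleftrightarrow> z = x \<or> z = y)
      \<and> (\<forall>z. E z p \<longleftrightarrow> z = s \<or> z = d))"

definition GB_base :: "('s \<Rightarrow> 's \<Rightarrow> bool) \<Rightarrow> ('s \<Rightarrow> 'c \<Rightarrow> bool) \<Rightarrow> bool" where
  "GB_base E C \<longleftrightarrow>
     (\<forall>a b. (\<forall>x. E x a \<longleftrightarrow> E x b) \<longrightarrow> a = b) \<and>
     (\<forall>X Y. (\<forall>x. C x X \<longleftrightarrow> C x Y) \<longrightarrow> X = Y) \<and>
     (\<forall>a b. \<exists>c. \<forall>x. E x c \<longleftrightarrow> x = a \<or> x = b) \<and>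
     (\<forall>a. \<exists>u. \<forall>x. E x u \<longleftrightarrow> (\<exists>y. E y a \<and> E x y)) \<and>
     (\<forall>a. \<exists>p. \<forall>x. E x p \<longleftrightarrow> (\<forall>y. E y x \<longrightarrow> E y a)) \<and>
     (\<forall>a. (\<exists>x. E x a) \<longrightarrow> (\<exists>x. E x a \<and> \<not> (\<exists>y. E y x \<and> E y a))) \<and>
     (\<forall>X a. \<exists>b. \<forall>x. E x b \<longleftrightarrow> E x a \<and> C x X) \<and>
     (\<forall>F a. (\<forall>x y y' p p'. is_opair E p x y \<and> is_opair E p' x y' \<and> C p F \<and> C p' F \<longrightarrow> y = y')
        \<longrightarrow> (\<exists>b. \<forall>y. E y b \<longleftrightarrow> (\<exists>x p. E x a \<and> is_opair E p x y \<and> C p F))) \<and>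
     (\<forall>\<phi> s c. \<exists>X. \<forall>a. C a X \<longleftrightarrow> csat E C (case_nat a s) c \<phi>)"

definition Infinity :: "('s \<Rightarrow> 's \<Rightarrow> bool) \<Rightarrow> bool" where
  "Infinity E \<longleftrightarrow> (\<exists>I. (\<exists>e. E e I \<and> (\<forall>z. \<not> E z e)) \<and>
     (\<forall>x. E x I \<longrightarrow> (\<exists>s. E s I \<and> (\<forall>z. E z s \<longleftrightarrow> E z x \<or> z = x))))"

definition TC_axiom :: "('s \<Rightarrow> 's \<Rightarrow> bool) \<Rightarrow> bool" where
  "TC_axiom E \<longleftrightarrow> (\<forall>a. \<exists>t. subset E a t \<and> transitive E t \<and>
     (\<forall>t'. subset E a t' \<and> transitive E t' \<longrightarrow> subset E t t'))"

text \<open>GB^{+\<infinity>} = GB;  GB^{-\<infinity>} = GB_fin + TC.\<close>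
definition GB_plus :: "('s \<Rightarrow> 's \<Rightarrow> bool) \<Rightarrow> ('s \<Rightarrow> 'c \<Rightarrow> bool) \<Rightarrow> bool" where
  "GB_plus E C \<longleftrightarrow> GB_base E C \<and> Infinity E"

definition GB_minus :: "('s \<Rightarrow> 's \<Rightarrow> bool) \<Rightarrow> ('s \<Rightarrow> 'c \<Rightarrow> bool) \<Rightarrow> bool" where
  "GB_minus E C \<longleftrightarrow> GB_base E C \<and> \<not> Infinity E \<and> TC_axiom E"

section \<open>Internal coding of L_ZF formulas (with constants c_a)\<close>

definition Var :: "('s \<Rightarrow> 's \<Rightarrow> bool) \<Rightarrow> 's \<Rightarrow> 's" where
  "Var E i = opair E (num E 0) i"
definition Const :: "('s \<Rightarrow> 's \<Rightarrow> bool) \<Rightarrow> 's \<Rightarrow> 's" where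
  "Const E a = opair E (num E 1) a"
definition FEq :: "('s \<Rightarrow> 's \<Rightarrow> bool) \<Rightarrow> 's \<Rightarrow> 's \<Rightarrow> 's" where
  "FEq E t s = opair E (num E 2) (opair E t s)"
definition FMem :: "('s \<Rightarrow> 's \<Rightarrow> bool) \<Rightarrow> 's \<Rightarrow> 's \<Rightarrow> 's" where
  "FMem E t s = opair E (num E 3) (opair E t s)"
definition FNeg :: "('s \<Rightarrow> 's \<Rightarrow> bool) \<Rightarrow> 's \<Rightarrow> 's" where
  "FNeg E p = opair E (num E 4) p"
definition FDisj :: "('s \<Rightarrow> 's \<Rightarrow> bool) \<Rightarrow> 's \<Rightarrow> 's \<Rightarrow> 's" where
  "FDisj E p q = opair E (num E 5) (opair E p q)"
definition FEx :: "('s \<Rightarrow> 's \<Rightarrow> bool) \<Rightarrow> 's \<Rightarrow> 's \<Rightarrow> 's" where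
  "FEx E i p = opair E (num E 6) (opair E i p)"

definition is_term :: "('s \<Rightarrow> 's \<Rightarrow> bool) \<Rightarrow> 's \<Rightarrow> bool" where
  "is_term E t \<longleftrightarrow> (\<exists>i. is_nat E i \<and> t = Var E i) \<or> (\<exists>a. t = Const E a)"

definition is_var_term :: "('s \<Rightarrow> 's \<Rightarrow> bool) \<Rightarrow> 's \<Rightarrow> bool" where
  "is_var_term E t \<longleftrightarrow> (\<exists>i. is_nat E i \<and> t = Var E i)"

definition node_ok :: "('s \<Rightarrow> 's \<Rightarrow> bool) \<Rightarrow> ('s \<Rightarrow> bool) \<Rightarrow> 's \<Rightarrow> 's \<Rightarrow> bool" where
  "node_ok E P S y \<longleftrightarrow>
     (\<exists>t s. P t \<and> P s \<and> (y = FEq E t s \<or> y = FMem E t s)) \<or>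
     (\<exists>p. E p S \<and> y = FNeg E p) \<or>
     (\<exists>p q. E p S \<and> E q S \<and> y = FDisj E p q) \<or>
     (\<exists>i p. is_nat E i \<and> E p S \<and> y = FEx E i p)"

text \<open>x is a formula iff it lies in a set closed under taking immediate subformulas
  all of whose elements are well-formed nodes (well-foundedness comes from Foundation).\<close>
definition formula_gen :: "('s \<Rightarrow> 's \<Rightarrow> bool) \<Rightarrow> ('s \<Rightarrow> bool) \<Rightarrow> 's \<Rightarrow> bool" where
  "formula_gen E P x \<longleftrightarrow> (\<exists>S. E x S \<and> (\<forall>y. E y S \<longrightarrow> node_ok E P S y))"

definition is_formula :: "('s \<Rightarrow> 's \<Rightarrow> bool) \<Rightarrow> 's \<Rightarrow> bool" where
  "is_formula E x \<longleftrightarrow> formula_gen E (is_term E) x"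

definition is_LZF :: "('s \<Rightarrow> 's \<Rightarrow> bool) \<Rightarrow> 's \<Rightarrow> bool" where
  "is_LZF E x \<longleftrightarrow> formula_gen E (is_var_term E) x"

text \<open>depth: longest path in the parse tree; atomic formulas have depth 0.
  F is a set of pairs (formula, depth) each justified by the recursive clauses.\<close>
definition depth_ok :: "('s \<Rightarrow> 's \<Rightarrow> bool) \<Rightarrow> 's \<Rightarrow> 's \<Rightarrow> bool" where
  "depth_ok E F p \<longleftrightarrow>
     (\<exists>t s. p = opair E (FEq E t s) (emp E) \<or> p = opair E (FMem E t s) (emp E)) \<or>
     (\<exists>q d. p = opair E (FNeg E q) (succ E d) \<and> E (opair E q d) F) \<or>
     (\<exists>q r d1 d2. p = opair E (FDisj E q r) (succ E (union2 E d1 d2)) \<and>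
         E (opair E q d1) F \<and> E (opair E r d2) F) \<or>
     (\<exists>i q d. p = opair E (FEx E i q) (succ E d) \<and> E (opair E q d) F)"

definition has_depth :: "('s \<Rightarrow> 's \<Rightarrow> bool) \<Rightarrow> 's \<Rightarrow> 's \<Rightarrow> bool" where
  "has_depth E x d \<longleftrightarrow> is_formula E x \<and>
     (\<exists>F. E (opair E x d) F \<and> (\<forall>p. E p F \<longrightarrow> depth_ok E F p))"

definition term_bound :: "('s \<Rightarrow> 's \<Rightarrow> bool) \<Rightarrow> 's \<Rightarrow> 's \<Rightarrow> bool" where
  "term_bound E B t \<longleftrightarrow> (\<exists>a. t = Const E a) \<or> (\<exists>i. t = Var E i \<and> E i B)"

definition free_ok :: "('s \<Rightarrow> 's \<Rightarrow> bool) \<Rightarrow> 's \<Rightarrow> 's \<Rightarrow> bool" where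
  "free_ok E F p \<longleftrightarrow>
     (\<exists>t s B. (p = opair E (FEq E t s) B \<or> p = opair E (FMem E t s) B) \<and>
         term_bound E B t \<and> term_bound E B s) \<or>
     (\<exists>q B. p = opair E (FNeg E q) B \<and> E (opair E q B) F) \<or>
     (\<exists>q r B. p = opair E (FDisj E q r) B \<and> E (opair E q B) F \<and> E (opair E r B) F) \<or>
     (\<exists>i q B. p = opair E (FEx E i q) B \<and> E (opair E q (union2 E B (upair E i i))) F)"

definition free_within :: "('s \<Rightarrow> 's \<Rightarrow> bool) \<Rightarrow> 's \<Rightarrow> 's \<Rightarrow> bool" where
  "free_within E x B \<longleftrightarrow> (\<exists>F. E (opair E x B) F \<and> (\<forall>p. E p F \<longrightarrow> free_ok E F p))"

definition is_sentence :: "('s \<Rightarrow> 's \<Rightarrow> bool) \<Rightarrow> 's \<Rightarrow> bool" where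
  "is_sentence E x \<longleftrightarrow> is_formula E x \<and> free_within E x (emp E)"

text \<open>is_subst E x i a y: y is x with the constant c_a substituted for the free occurrences of v_i.\<close>
definition subst_term :: "('s \<Rightarrow> 's \<Rightarrow> bool) \<Rightarrow> 's \<Rightarrow> 's \<Rightarrow> 's \<Rightarrow> 's" where
  "subst_term E i a t = (if t = Var E i then Const E a else t)"

definition subst_ok :: "('s \<Rightarrow> 's \<Rightarrow> bool) \<Rightarrow> 's \<Rightarrow> 's \<Rightarrow> 's \<Rightarrow> 's \<Rightarrow> bool" where
  "subst_ok E i a F p \<longleftrightarrow>
     (\<exists>t s. p = opair E (FEq E t s) (FEq E (subst_term E i a t) (subst_term E i a s))) \<or>
     (\<exists>t s. p = opair E (FMem E t s) (FMem E (subst_term E i a t) (subst_term E i a s))) \<or>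
     (\<exists>q q'. p = opair E (FNeg E q) (FNeg E q') \<and> E (opair E q q') F) \<or>
     (\<exists>q r q' r'. p = opair E (FDisj E q r) (FDisj E q' r') \<and> E (opair E q q') F \<and> E (opair E r r') F) \<or>
     (\<exists>q. p = opair E (FEx E i q) (FEx E i q)) \<or>
     (\<exists>j q q'. j \<noteq> i \<and> p = opair E (FEx E j q) (FEx E j q') \<and> E (opair E q q') F)"

definition is_subst :: "('s \<Rightarrow> 's \<Rightarrow> bool) \<Rightarrow> 's \<Rightarrow> 's \<Rightarrow> 's \<Rightarrow> 's \<Rightarrow> bool" where
  "is_subst E x i a y \<longleftrightarrow> (\<exists>F. E (opair E x y) F \<and> (\<forall>p. E p F \<longrightarrow> subst_ok E i a F p))"

text \<open>Sentences obtained by substituting constants into formulas of Depth_k.\<close>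
definition in_Depth :: "('s \<Rightarrow> 's \<Rightarrow> bool) \<Rightarrow> 's \<Rightarrow> 's \<Rightarrow> bool" where
  "in_Depth E k x \<longleftrightarrow> is_sentence E x \<and> (\<exists>d. has_depth E x d \<and> subset E d k)"

definition truth_class :: "('s \<Rightarrow> 's \<Rightarrow> bool) \<Rightarrow> ('s \<Rightarrow> 'c \<Rightarrow> bool) \<Rightarrow> 'c \<Rightarrow> 's \<Rightarrow> bool" where
  "truth_class E C T k \<longleftrightarrow>
     (\<forall>x. C x T \<longrightarrow> in_Depth E k x) \<and>
     (\<forall>x. in_Depth E k x \<longrightarrow>
        (\<forall>a b. x = FEq E (Const E a) (Const E b) \<longrightarrow> (C x T \<longleftrightarrow> a = b)) \<and>
        (\<forall>a b. x = FMem E (Const E a) (Const E b) \<longrightarrow> (C x T \<longleftrightarrow> E a b)) \<and>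
        (\<forall>q. x = FNeg E q \<longrightarrow> (C x T \<longleftrightarrow> \<not> C q T)) \<and>
        (\<forall>q r. x = FDisj E q r \<longrightarrow> (C x T \<longleftrightarrow> C q T \<or> C r T)) \<and>
        (\<forall>i q. x = FEx E i q \<longrightarrow> (C x T \<longleftrightarrow> (\<exists>a y. is_subst E q i a y \<and> C y T))))"

definition C_Most :: "('s \<Rightarrow> 's \<Rightarrow> bool) \<Rightarrow> ('s \<Rightarrow> 'c \<Rightarrow> bool) \<Rightarrow> 's \<Rightarrow> bool" where
  "C_Most E C k \<longleftrightarrow> is_nat E k \<and> (\<exists>T. truth_class E C T k)"

definition T_Most :: "('s \<Rightarrow> 's \<Rightarrow> bool) \<Rightarrow> ('s \<Rightarrow> 'c \<Rightarrow> bool) \<Rightarrow> 's \<Rightarrow> bool" where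
  "T_Most E C x \<longleftrightarrow> is_sentence E x \<and>
     (\<exists>d p T. has_depth E x d \<and> is_nat E p \<and> subset E d p \<and> C x T \<and> truth_class E C T p)"

definition FAnd :: "('s \<Rightarrow> 's \<Rightarrow> bool) \<Rightarrow> 's \<Rightarrow> 's \<Rightarrow> 's" where
  "FAnd E p q = FNeg E (FDisj E (FNeg E p) (FNeg E q))"
definition FImp :: "('s \<Rightarrow> 's \<Rightarrow> bool) \<Rightarrow> 's \<Rightarrow> 's \<Rightarrow> 's" where
  "FImp E p q = FDisj E (FNeg E p) q"
definition FIff :: "('s \<Rightarrow> 's \<Rightarrow> bool) \<Rightarrow> 's \<Rightarrow> 's \<Rightarrow> 's" where
  "FIff E p q = FAnd E (FImp E p q) (FImp E q p)"
definition FAll :: "('s \<Rightarrow> 's \<Rightarrow> bool) \<Rightarrow> 's \<Rightarrow> 's \<Rightarrow> 's" where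
  "FAll E i p = FNeg E (FEx E i (FNeg E p))"

text \<open>The code of
  \<forall>z ((\<forall>x \<exists>!y \<phi>) \<rightarrow> \<forall>v \<exists>w \<forall>y (y \<in> w \<leftrightarrow> \<exists>x (x \<in> v \<and> \<phi>))),
  where \<exists>!y \<phi> abbreviates \<exists>y (\<phi> \<and> \<forall>u (\<exists>y (y = u \<and> \<phi>) \<rightarrow> u = y)).\<close>
definition repl_inst :: "('s \<Rightarrow> 's \<Rightarrow> bool) \<Rightarrow> 's \<Rightarrow> 's \<Rightarrow> 's \<Rightarrow> 's \<Rightarrow> 's \<Rightarrow> 's \<Rightarrow> 's \<Rightarrow> 's" where
  "repl_inst E \<phi> x y z u v w =
     FAll E z (FImp E
       (FAll E x (FEx E y (FAnd E \<phi>
          (FAll E u (FImp E (FEx E y (FAnd E (FEq E (Var E y) (Var E u)) \<phi>))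
                            (FEq E (Var E u) (Var E y)))))))
       (FAll E v (FEx E w (FAll E y
          (FIff E (FMem E (Var E y) (Var E w))
                  (FEx E x (FAnd E (FMem E (Var E x) (Var E v)) \<phi>)))))))"

definition is_repl_instance :: "('s \<Rightarrow> 's \<Rightarrow> bool) \<Rightarrow> 's \<Rightarrow> bool" where
  "is_repl_instance E \<sigma> \<longleftrightarrow>
     (\<exists>\<phi> x y z u v w. is_LZF E \<phi> \<and>
        is_nat E x \<and> is_nat E y \<and> is_nat E z \<and> is_nat E u \<and> is_nat E v \<and> is_nat E w \<and>
        distinct [x, y, z, u, v, w] \<and>
        free_within E \<phi> (union2 E (upair E x y) (upair E z z)) \<and>
        \<sigma> = repl_inst E \<phi> x y z u v w)"

end

theory Submission
  imports Defs
begin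

datatype nf = NMem nat nat | NEq nat nat | NIn nat nat | NNeg nf | NDisj nf nf | NEx nat nf

fun nsat :: "('s \<Rightarrow> 's \<Rightarrow> bool) \<Rightarrow> ('s \<Rightarrow> 'c \<Rightarrow> bool) \<Rightarrow> (nat \<Rightarrow> 's) \<Rightarrow> (nat \<Rightarrow> 'c) \<Rightarrow> nf \<Rightarrow> bool" where
  "nsat E C s c (NMem i j) = E (s i) (s j)"
| "nsat E C s c (NEq i j) = (s i = s j)"
| "nsat E C s c (NIn i j) = C (s i) (c j)"
| "nsat E C s c (NNeg p) = (\<not> nsat E C s c p)"
| "nsat E C s c (NDisj p q) = (nsat E C s c p \<or> nsat E C s c q)"
| "nsat E C s c (NEx n p) = (\<exists>a. nsat E C (s(n := a)) c p)"

fun tr :: "(nat \<Rightarrow> nat) \<Rightarrow> nf \<Rightarrow> cfm" where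
  "tr f (NMem i j) = CMem (f i) (f j)"
| "tr f (NEq i j) = CEq (f i) (f j)"
| "tr f (NIn i j) = CIn (f i) j"
| "tr f (NNeg p) = CNeg (tr f p)"
| "tr f (NDisj p q) = CDisj (tr f p) (tr f q)"
| "tr f (NEx n p) = CEx (tr (\<lambda>k. if k = n then 0 else Suc (f k)) p)"

lemma csat_tr: "csat E C s c (tr f p) \<longleftrightarrow> nsat E C (s \<circ> f) c p"
proof (induction p arbitrary: f s)
  case (NEx n p)
  have "\<And>a. (\<lambda>b. case (if b = n then 0 else Suc (f b)) of 0 \<Rightarrow> a | Suc x \<Rightarrow> s x) = (\<lambda>a. s (f a))(n := a)"
    by (rule ext) auto
  then show ?case using NEx by (simp add: comp_def)
qed auto

definition NAnd where "NAnd p q = NNeg (NDisj (NNeg p) (NNeg q))"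
definition NImp where "NImp p q = NDisj (NNeg p) q"
definition NIff where "NIff p q = NAnd (NImp p q) (NImp q p)"
definition NAll where "NAll n p = NNeg (NEx n (NNeg p))"

lemma nsat_macros[simp]:
  "nsat E C s c (NAnd p q) = (nsat E C s c p \<and> nsat E C s c q)"
  "nsat E C s c (NImp p q) = (nsat E C s c p \<longrightarrow> nsat E C s c q)"
  "nsat E C s c (NIff p q) = (nsat E C s c p \<longleftrightarrow> nsat E C s c q)"
  "nsat E C s c (NAll n p) = (\<forall>a. nsat E C (s(n := a)) c p)"
  by (auto simp: NAnd_def NImp_def NIff_def NAll_def)

definition NOP :: "nat \<Rightarrow> nat \<Rightarrow> nat \<Rightarrow> nf" where
  "NOP p x y = (let m = p + x + y in
    NEx (m+1) (NEx (m+2) (NAnd (NAll (m+3) (NIff (NMem (m+3) (m+1)) (NEq (m+3) x)))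
      (NAnd (NAll (m+3) (NIff (NMem (m+3) (m+2)) (NDisj (NEq (m+3) x) (NEq (m+3) y))))
         (NAll (m+3) (NIff (NMem (m+3) p) (NDisj (NEq (m+3) (m+1)) (NEq (m+3) (m+2)))))))))"

lemma nsat_NOP[simp]: "nsat E C s c (NOP p x y) = is_opair E (s p) (s x) (s y)"
  unfolding NOP_def Let_def is_opair_def by simp

definition defbl :: "('s \<Rightarrow> 'c \<Rightarrow> bool) \<Rightarrow> ('s \<Rightarrow> bool) \<Rightarrow> bool" where
  "defbl C P \<longleftrightarrow> (\<exists>X. \<forall>a. C a X \<longleftrightarrow> P a)"

locale gbm =
  fixes E :: "'s \<Rightarrow> 's \<Rightarrow> bool" and C :: "'s \<Rightarrow> 'c \<Rightarrow> bool"
  assumes gb: "GB_base E C"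
begin

lemmas gb' = gb[unfolded GB_base_def]
lemmas ax = conjunct1[OF gb'] conjunct1[OF conjunct2[OF conjunct2[OF gb']]]
  conjunct1[OF conjunct2[OF conjunct2[OF conjunct2[OF gb']]]]
  conjunct1[OF conjunct2[OF conjunct2[OF conjunct2[OF conjunct2[OF gb']]]]]
  conjunct1[OF conjunct2[OF conjunct2[OF conjunct2[OF conjunct2[OF conjunct2[OF gb']]]]]]
  conjunct1[OF conjunct2[OF conjunct2[OF conjunct2[OF conjunct2[OF conjunct2[OF conjunct2[OF gb']]]]]]]
  conjunct1[OF conjunct2[OF conjunct2[OF conjunct2[OF conjunct2[OF conjunct2[OF conjunct2[OF conjunct2[OF gb']]]]]]]]
  conjunct2[OF conjunct2[OF conjunct2[OF conjunct2[OF conjunct2[OF conjunct2[OF conjunct2[OF conjunct2[OF gb']]]]]]]]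

lemma ext_ax: "(\<And>x. E x a \<longleftrightarrow> E x b) \<Longrightarrow> a = b"
  using ax(1) by blast
lemma pair_ax: "\<exists>c. \<forall>x. E x c \<longleftrightarrow> x = a \<or> x = b"
  using ax(2) by blast
lemma union_ax: "\<exists>u. \<forall>x. E x u \<longleftrightarrow> (\<exists>y. E y a \<and> E x y)"
  using ax(3) by blast
lemma power_ax: "\<exists>p. \<forall>x. E x p \<longleftrightarrow> (\<forall>y. E y x \<longrightarrow> E y a)"
  using ax(4) by blast
lemma found_ax: "E x a \<Longrightarrow> \<exists>x. E x a \<and> \<not> (\<exists>y. E y x \<and> E y a)"
  using ax(5) by blast
lemma sep_ax: "\<exists>b. \<forall>x. E x b \<longleftrightarrow> E x a \<and> C x X"
  using ax(6) by blast
lemma repl_ax: "(\<forall>x y y' p p'. is_opair E p x y \<and> is_opair E p' x y' \<and> C p F \<and> C p' F \<longrightarrow> y = y')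
        \<Longrightarrow> (\<exists>b. \<forall>y. E y b \<longleftrightarrow> (\<exists>x p. E x a \<and> is_opair E p x y \<and> C p F))"
  using ax(7) by blast
lemma compr_ax: "\<exists>X. \<forall>a. C a X \<longleftrightarrow> csat E C (case_nat a s) c \<phi>"
  using ax(8) by blast

lemma defbl_nsat: "defbl C (\<lambda>a. nsat E C (s(0 := a)) c p)"
proof -
  obtain X where X: "\<forall>a. C a X \<longleftrightarrow> csat E C (case_nat a (\<lambda>k. s (Suc k))) c (tr id p)"
    using compr_ax by blast
  have "\<And>a. case_nat a (\<lambda>k. s (Suc k)) \<circ> id = s(0 := a)"
    by (rule ext) (simp split: nat.split)
  then show ?thesis unfolding defbl_def using X by (auto simp: csat_tr)
qed

lemma sep: "defbl C P \<Longrightarrow> \<exists>b. \<forall>x. E x b \<longleftrightarrow> E x a \<and> P x"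
  unfolding defbl_def using sep_ax by metis

lemma defblI: "(\<And>a. P a \<longleftrightarrow> nsat E C (s(0 := a)) c p) \<Longrightarrow> defbl C P"
proof -
  assume "\<And>a. P a \<longleftrightarrow> nsat E C (s(0 := a)) c p"
  then have "P = (\<lambda>a. nsat E C (s(0 := a)) c p)" by auto
  then show ?thesis using defbl_nsat by simp
qed

lemma upair_mem[simp]: "E x (upair E a b) \<longleftrightarrow> x = a \<or> x = b"
proof -
  obtain c where c: "\<forall>x. E x c \<longleftrightarrow> x = a \<or> x = b" using pair_ax by blast
  have "upair E a b = c" unfolding upair_def
    apply (rule the_equality)
     apply (simp add: c)
    apply (rule ext_ax) using c by auto
  then show ?thesis using c by simp
qed

lemma emp_mem[simp]: "\<not> E x (emp E)"
proof -
  obtain X where X: "\<forall>a. C a X \<longleftrightarrow> nsat E C ((\<lambda>_. undefined)(0 := a)) (\<lambda>_. undefined) (NNeg (NEq 0 0))"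
    using defbl_nsat unfolding defbl_def by blast
  obtain b where b: "\<forall>x. E x b \<longleftrightarrow> E x undefined \<and> C x X" using sep_ax by blast
  have "emp E = b" unfolding emp_def
    apply (rule the_equality)
     apply (simp add: b X)
    apply (rule ext_ax) using b X by auto
  then show ?thesis using b X by simp
qed

lemma union2_mem[simp]: "E x (union2 E a b) \<longleftrightarrow> E x a \<or> E x b"
proof -
  obtain u where u0: "\<forall>x. E x u \<longleftrightarrow> (\<exists>y. E y (upair E a b) \<and> E x y)" using union_ax by blast
  have u: "\<forall>x. E x u \<longleftrightarrow> E x a \<or> E x b" using u0 by auto
  have "union2 E a b = u" unfolding union2_def
    apply (rule the_equality)
     apply (simp add: u)
    apply (rule ext_ax) using u by auto
  then show ?thesis using u by simp
qed

lemma succ_mem[simp]: "E x (succ E a) \<longleftrightarrow> E x a \<or> x = a"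
  by (auto simp: succ_def)

lemma upair_eq: "upair E a b = upair E c d \<longleftrightarrow> (a = c \<and> b = d) \<or> (a = d \<and> b = c)"
proof
  assume h: "upair E a b = upair E c d"
  have "\<And>x. E x (upair E a b) = E x (upair E c d)" using h by simp
  then have m: "\<And>x. (x = a \<or> x = b) = (x = c \<or> x = d)" by simp
  show "(a = c \<and> b = d) \<or> (a = d \<and> b = c)"
    using m[of a] m[of b] m[of c] m[of d] by blast
next
  assume "(a = c \<and> b = d) \<or> (a = d \<and> b = c)"
  then show "upair E a b = upair E c d" by (intro ext_ax) auto
qed

lemma opair_inj[simp]: "opair E a b = opair E c d \<longleftrightarrow> a = c \<and> b = d"
proof
  assume "opair E a b = opair E c d"
  then have "upair E (upair E a a) (upair E a b) = upair E (upair E c c) (upair E c d)"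
    unfolding opair_def .
  then have "(upair E a a = upair E c c \<and> upair E a b = upair E c d) \<or>
             (upair E a a = upair E c d \<and> upair E a b = upair E c c)"
    unfolding upair_eq[of "upair E a a"] by blast
  then show "a = c \<and> b = d"
  proof
    assume h: "upair E a a = upair E c c \<and> upair E a b = upair E c d"
    then have ac: "a = c" unfolding upair_eq by blast
    then show ?thesis using h unfolding upair_eq by blast
  next
    assume h: "upair E a a = upair E c d \<and> upair E a b = upair E c c"
    then show ?thesis unfolding upair_eq by blast
  qed
qed simp

lemma is_opair_eq[simp]: "is_opair E p x y \<longleftrightarrow> p = opair E x y"
proof
  assume "is_opair E p x y"
  then obtain s d where s: "\<forall>z. E z s \<longleftrightarrow> z = x" and d: "\<forall>z. E z d \<longleftrightarrow> z = x \<or> z = y"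
     and p: "\<forall>z. E z p \<longleftrightarrow> z = s \<or> z = d" unfolding is_opair_def by blast
  have "s = upair E x x" using s by (intro ext_ax) simp
  moreover have "d = upair E x y" using d by (intro ext_ax) simp
  ultimately show "p = opair E x y" unfolding opair_def using p by (intro ext_ax) simp
next
  assume "p = opair E x y"
  then show "is_opair E p x y" unfolding is_opair_def opair_def
    by (intro exI[of _ "upair E x x"] exI[of _ "upair E x y"]) simp
qed

end

fun ch :: "('s \<Rightarrow> 's \<Rightarrow> bool) \<Rightarrow> nat \<Rightarrow> 's \<Rightarrow> 's \<Rightarrow> bool" where
  "ch E 0 a b = (a = b)"
| "ch E (Suc n) a b = (\<exists>w. E a w \<and> ch E n w b)"

lemma ch_Suc': "ch E (Suc n) a b \<longleftrightarrow> (\<exists>w. ch E n a w \<and> E w b)"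
  by (induction n arbitrary: a) auto

fun NCh :: "nat \<Rightarrow> nat \<Rightarrow> nat \<Rightarrow> nf" where
  "NCh 0 a b = NEq a b"
| "NCh (Suc n) a b = NEx (a+b+1) (NAnd (NMem a (a+b+1)) (NCh n (a+b+1) b))"

lemma nsat_NCh[simp]: "nsat E C s c (NCh n a b) \<longleftrightarrow> ch E n (s a) (s b)"
  by (induction n arbitrary: a s) auto

fun NOr :: "nf list \<Rightarrow> nf" where
  "NOr [] = NNeg (NEq 0 0)"
| "NOr (p # ps) = NDisj p (NOr ps)"

lemma nsat_NOr[simp]: "nsat E C s c (NOr ps) \<longleftrightarrow> (\<exists>p\<in>set ps. nsat E C s c p)"
  by (induction ps) auto

definition prs :: "(nat \<times> nat) list" where
  "prs = filter (\<lambda>(j,l). j + l \<le> 4) (List.product [0..<5] [0..<5])"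

lemma prs_mem: "(j, l) \<in> set prs \<longleftrightarrow> j + l \<le> 4"
  unfolding prs_def by auto

definition subf :: "('s \<Rightarrow> 's \<Rightarrow> bool) \<Rightarrow> 's \<Rightarrow> 's \<Rightarrow> bool" where
  "subf E q0 q \<longleftrightarrow> (\<exists>n. q = opair E n q0) \<or> (\<exists>n r. q = opair E n (opair E q0 r)) \<or>
     (\<exists>n r. q = opair E n (opair E r q0))"

context gbm begin

lemma num_mem: "E x (num E n) \<longleftrightarrow> (\<exists>m<n. x = num E m)"
  by (induction n arbitrary: x) (auto simp: less_Suc_eq)

lemma not_self: "\<not> E x x"
proof
  assume h: "E x x"
  have "E x (upair E x x)" by simp
  then obtain y where "E y (upair E x x)" "\<not> (\<exists>z. E z y \<and> E z (upair E x x))"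
    using found_ax by blast
  then show False using h by auto
qed

lemma num_inj[simp]: "num E m = num E n \<longleftrightarrow> m = n"
proof
  assume h: "num E m = num E n"
  show "m = n"
  proof (rule ccontr)
    assume "m \<noteq> n"
    then have "m < n \<or> n < m" by arith
    then show False
    proof
      assume "m < n" then have "E (num E m) (num E n)" using num_mem by blast
      then show False using h not_self by simp
    next
      assume "n < m" then have "E (num E n) (num E m)" using num_mem by blast
      then show False using h not_self by simp
    qed
  qed
qed simp

lemma code_inj[simp]:
  "(Var E i = Var E i') = (i = i')"
  "(Const E a = Const E a') = (a = a')"
  "(FEq E t s = FEq E t' s') = (t = t' \<and> s = s')"
  "(FMem E t s = FMem E t' s') = (t = t' \<and> s = s')"
  "(FNeg E p = FNeg E p') = (p = p')"
  "(FDisj E p q = FDisj E p' q') = (p = p' \<and> q = q')"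
  "(FEx E i p = FEx E i' p') = (i = i' \<and> p = p')"
  by (simp_all add: Var_def Const_def FEq_def FMem_def FNeg_def FDisj_def FEx_def del: num.simps)

lemma code_dist[simp]:
  "Var E i \<noteq> Const E a'"
  "Var E i \<noteq> FEq E t' s'"
  "Var E i \<noteq> FMem E t' s'"
  "Var E i \<noteq> FNeg E p'"
  "Var E i \<noteq> FDisj E p' q'"
  "Var E i \<noteq> FEx E i' p'"
  "Const E a \<noteq> Var E i'"
  "Const E a \<noteq> FEq E t' s'"
  "Const E a \<noteq> FMem E t' s'"
  "Const E a \<noteq> FNeg E p'"
  "Const E a \<noteq> FDisj E p' q'"
  "Const E a \<noteq> FEx E i' p'"
  "FEq E t s \<noteq> Var E i'"
  "FEq E t s \<noteq> Const E a'"
  "FEq E t s \<noteq> FMem E t' s'"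
  "FEq E t s \<noteq> FNeg E p'"
  "FEq E t s \<noteq> FDisj E p' q'"
  "FEq E t s \<noteq> FEx E i' p'"
  "FMem E t s \<noteq> Var E i'"
  "FMem E t s \<noteq> Const E a'"
  "FMem E t s \<noteq> FEq E t' s'"
  "FMem E t s \<noteq> FNeg E p'"
  "FMem E t s \<noteq> FDisj E p' q'"
  "FMem E t s \<noteq> FEx E i' p'"
  "FNeg E p \<noteq> Var E i'"
  "FNeg E p \<noteq> Const E a'"
  "FNeg E p \<noteq> FEq E t' s'"
  "FNeg E p \<noteq> FMem E t' s'"
  "FNeg E p \<noteq> FDisj E p' q'"
  "FNeg E p \<noteq> FEx E i' p'"
  "FDisj E p q \<noteq> Var E i'"
  "FDisj E p q \<noteq> Const E a'"
  "FDisj E p q \<noteq> FEq E t' s'"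
  "FDisj E p q \<noteq> FMem E t' s'"
  "FDisj E p q \<noteq> FNeg E p'"
  "FDisj E p q \<noteq> FEx E i' p'"
  "FEx E i p \<noteq> Var E i'"
  "FEx E i p \<noteq> Const E a'"
  "FEx E i p \<noteq> FEq E t' s'"
  "FEx E i p \<noteq> FMem E t' s'"
  "FEx E i p \<noteq> FNeg E p'"
  "FEx E i p \<noteq> FDisj E p' q'"
  by (simp_all add: Var_def Const_def FEq_def FMem_def FNeg_def FDisj_def FEx_def del: num.simps)


definition bigU :: "'s \<Rightarrow> 's" where
  "bigU a = (THE u. \<forall>x. E x u \<longleftrightarrow> (\<exists>y. E y a \<and> E x y))"

lemma bigU_mem[simp]: "E x (bigU a) \<longleftrightarrow> (\<exists>y. E y a \<and> E x y)"
proof -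
  obtain u where u: "\<forall>x. E x u \<longleftrightarrow> (\<exists>y. E y a \<and> E x y)" using union_ax by blast
  have "bigU a = u" unfolding bigU_def
    apply (rule the_equality)
     apply (simp add: u)
    apply (rule ext_ax) using u by auto
  then show ?thesis using u by simp
qed

lemma ch_bigU: "ch E l w q \<Longrightarrow> E q B \<Longrightarrow> E w ((bigU ^^ l) B)"
proof (induction l arbitrary: w)
  case 0 then show ?case by simp
next
  case (Suc l)
  then obtain v where "E w v" "ch E l v q" by auto
  then show ?case using Suc by auto
qed

definition U4 :: "'s \<Rightarrow> 's" where
  "U4 B = union2 E ((bigU ^^ 0) B) (union2 E ((bigU ^^ 1) B) (union2 E ((bigU ^^ 2) B) (union2 E ((bigU ^^ 3) B) ((bigU ^^ 4) B))))"

lemma ch_U4: "ch E l w q \<Longrightarrow> E q B \<Longrightarrow> l \<le> 4 \<Longrightarrow> E w (U4 B)"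
proof -
  assume a: "ch E l w q" "E q B" "l \<le> 4"
  have "E w ((bigU ^^ l) B)" using a ch_bigU by blast
  moreover have "l = 0 \<or> l = 1 \<or> l = 2 \<or> l = 3 \<or> l = 4" using a by arith
  ultimately show ?thesis unfolding U4_def union2_mem by blast
qed

lemma ch1I: "E x w \<Longrightarrow> ch E 1 x w" by simp
lemma ch3I: "E x a \<Longrightarrow> E a b \<Longrightarrow> E b w \<Longrightarrow> ch E 3 x w" by (simp add: numeral_eq_Suc) blast

lemma subf_ch: "subf E q0 m \<Longrightarrow> \<exists>w. E w m \<and> (ch E 1 q0 w \<or> ch E 3 q0 w)"
  unfolding subf_def opair_def
  apply (elim disjE exE)
  subgoal for n by (rule exI[of _ "upair E n q0"]) (simp add: ch1I)
  subgoal for n r apply (rule exI[of _ "upair E n (upair E (upair E q0 q0) (upair E q0 r))"])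
    apply (intro conjI disjI2) apply simp apply (rule ch3I[of _ "upair E q0 q0" "upair E (upair E q0 q0) (upair E q0 r)"]) by simp_all
  subgoal for n r apply (rule exI[of _ "upair E n (upair E (upair E r r) (upair E r q0))"])
    apply (intro conjI disjI2) apply simp apply (rule ch3I[of _ "upair E r q0" "upair E (upair E r r) (upair E r q0)"]) by simp_all
  done

lemma no_bad:
  assumes step: "\<And>q. E q B \<Longrightarrow> \<exists>q0. E q0 B \<and> subf E q0 q"
  shows "\<not> E x B"
proof
  assume xB: "E x B"
  define P where "P w \<longleftrightarrow> (\<exists>q q'. E q B \<and> E q' B \<and> (\<exists>(j,l)\<in>set prs. ch E j q w \<and> ch E l w q'))" for w
  have dP: "defbl C P"
  proof (rule defblI[where s="(\<lambda>_. B)" and c="\<lambda>_. undefined"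
        and p="NEx 2 (NEx 3 (NAnd (NMem 2 1) (NAnd (NMem 3 1)
              (NOr (map (\<lambda>(j,l). NAnd (NCh j 2 0) (NCh l 0 3)) prs)))))"])
    fix a show "P a = nsat E C ((\<lambda>_. B)(0 := a)) (\<lambda>_. undefined)
      (NEx 2 (NEx 3 (NAnd (NMem 2 1) (NAnd (NMem 3 1)
              (NOr (map (\<lambda>(j,l). NAnd (NCh j 2 0) (NCh l 0 3)) prs))))))"
      unfolding P_def by (auto simp: split_def)
  qed
  obtain Bs where Bs: "\<forall>w. E w Bs \<longleftrightarrow> E w (U4 B) \<and> P w" using sep[OF dP] by blast
  have "(0,0) \<in> set prs" by (simp add: prs_mem)
  then have "\<exists>(j,l)\<in>set prs. ch E j x x \<and> ch E l x x" by force
  then have "P x" unfolding P_def using xB by blast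
  moreover have "E x (U4 B)" using ch_U4[of 0 x x B] xB by simp
  ultimately have "E x Bs" using Bs by simp
  then obtain m where mB: "E m Bs" and mmin: "\<not> (\<exists>y. E y m \<and> E y Bs)" using found_ax by blast
  then obtain q q' j l where qB: "E q B" and q'B: "E q' B" and jl: "(j,l) \<in> set prs"
     and cj: "ch E j q m" and cl: "ch E l m q'" using Bs unfolding P_def by blast
  show False
  proof (cases j)
    case 0
    then have "m = q" using cj by simp
    then obtain q0 where q0B: "E q0 B" and sf: "subf E q0 m" using step qB by blast
    obtain w where wm: "E w m" and cw: "ch E 1 q0 w \<or> ch E 3 q0 w" using subf_ch[OF sf] by blast
    have cwm: "ch E 1 w m" using wm by simp
    have "(1,1) \<in> set prs" "(3,1) \<in> set prs" by (simp_all add: prs_mem)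
    then have "P w" unfolding P_def using q0B qB \<open>m = q\<close> cw cwm by blast
    moreover have "E w (U4 B)" using ch_U4[OF cwm] qB \<open>m = q\<close> by simp
    ultimately show False using mmin wm Bs by blast
  next
    case (Suc j')
    then obtain v where cv: "ch E j' q v" and vm: "E v m" using cj ch_Suc' by metis
    have cl': "ch E (Suc l) v q'" using vm cl by auto
    have "(j', Suc l) \<in> set prs" using jl Suc by (simp add: prs_mem)
    then have "P v" unfolding P_def using qB q'B cv cl' by blast
    moreover have "Suc l \<le> 4" using jl Suc by (simp add: prs_mem)
    then have "E v (U4 B)" using ch_U4[OF cl' q'B] by simp
    ultimately show False using mmin vm Bs by blast
  qed
qed

end

definition valid :: "('s \<Rightarrow> 's \<Rightarrow> bool) \<Rightarrow> 's \<Rightarrow> 's \<Rightarrow> 's \<Rightarrow> bool" where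
  "valid E i a F \<longleftrightarrow> (\<forall>p. E p F \<longrightarrow> subst_ok E i a F p)"

definition subs :: "('s \<Rightarrow> 's \<Rightarrow> bool) \<Rightarrow> 's \<Rightarrow> 's \<Rightarrow> bool" where
  "subs E A B \<longleftrightarrow> (\<forall>x. E x A \<longrightarrow> E x B)"

context gbm begin

lemma is_subst_valid: "is_subst E x i a y \<longleftrightarrow> (\<exists>F. E (opair E x y) F \<and> valid E i a F)"
  unfolding is_subst_def valid_def by blast

definition pow :: "'s \<Rightarrow> 's" where
  "pow a = (THE p. \<forall>x. E x p \<longleftrightarrow> (\<forall>y. E y x \<longrightarrow> E y a))"

lemma pow_mem[simp]: "E x (pow a) \<longleftrightarrow> (\<forall>y. E y x \<longrightarrow> E y a)"
proof -
  obtain u where u: "\<forall>x. E x u \<longleftrightarrow> (\<forall>y. E y x \<longrightarrow> E y a)" using power_ax by blast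
  have "pow a = u" unfolding pow_def
    apply (rule the_equality)
     apply (simp add: u)
    apply (rule ext_ax) using u by auto
  then show ?thesis using u by simp
qed

lemma opair_bound: "E y Y \<Longrightarrow> E b Z \<Longrightarrow> E (opair E y b) (pow (pow (union2 E Y Z)))"
  unfolding opair_def by auto

lemma opair_in_U2: "E (opair E q y) F \<Longrightarrow> E q (bigU (bigU F)) \<and> E y (bigU (bigU F))"
  unfolding opair_def bigU_mem by (metis upair_mem)

lemma set_of: "defbl C P \<Longrightarrow> (\<And>x. P x \<Longrightarrow> E x A) \<Longrightarrow> \<exists>b. \<forall>x. E x b \<longleftrightarrow> P x"
  using sep by metis

definition sing :: "'s \<Rightarrow> 's" where "sing x = upair E x x"
lemma sing_mem[simp]: "E y (sing x) \<longleftrightarrow> y = x" by (simp add: sing_def)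

lemma subst_ok_pair: "subst_ok E i a F (opair E q y) \<longleftrightarrow>
  (\<exists>t s. q = FEq E t s \<and> y = FEq E (subst_term E i a t) (subst_term E i a s)) \<or>
  (\<exists>t s. q = FMem E t s \<and> y = FMem E (subst_term E i a t) (subst_term E i a s)) \<or>
  (\<exists>q0 y0. q = FNeg E q0 \<and> y = FNeg E y0 \<and> E (opair E q0 y0) F) \<or>
  (\<exists>q0 r0 y0 z0. q = FDisj E q0 r0 \<and> y = FDisj E y0 z0 \<and> E (opair E q0 y0) F \<and> E (opair E r0 z0) F) \<or>
  (\<exists>q0. q = FEx E i q0 \<and> y = q) \<or>
  (\<exists>j q0 y0. j \<noteq> i \<and> q = FEx E j q0 \<and> y = FEx E j y0 \<and> E (opair E q0 y0) F)"
  unfolding subst_ok_def opair_inj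
  apply (rule iffI)
   apply (elim disjE exE conjE; simp)
  apply (elim disjE exE conjE; simp)
  done

lemma so_FEq[simp]: "subst_ok E i a F (opair E (FEq E t s) y) \<longleftrightarrow> y = FEq E (subst_term E i a t) (subst_term E i a s)"
  by (simp add: subst_ok_pair)
lemma so_FMem[simp]: "subst_ok E i a F (opair E (FMem E t s) y) \<longleftrightarrow> y = FMem E (subst_term E i a t) (subst_term E i a s)"
  by (simp add: subst_ok_pair)
lemma so_FNeg[simp]: "subst_ok E i a F (opair E (FNeg E q0) y) \<longleftrightarrow> (\<exists>y0. y = FNeg E y0 \<and> E (opair E q0 y0) F)"
  by (simp add: subst_ok_pair)
lemma so_FDisj[simp]: "subst_ok E i a F (opair E (FDisj E q0 r0) y) \<longleftrightarrow>
   (\<exists>y0 z0. y = FDisj E y0 z0 \<and> E (opair E q0 y0) F \<and> E (opair E r0 z0) F)"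
  by (simp add: subst_ok_pair)
lemma so_FEx[simp]: "subst_ok E i a F (opair E (FEx E j q0) y) \<longleftrightarrow>
   (j = i \<and> y = FEx E j q0) \<or> (j \<noteq> i \<and> (\<exists>y0. y = FEx E j y0 \<and> E (opair E q0 y0) F))"
  by (auto simp: subst_ok_pair)

lemma subst_ok_mono: "subst_ok E i a F p \<Longrightarrow> subs E F G \<Longrightarrow> subst_ok E i a G p"
  unfolding subst_ok_def subs_def by blast

lemma st_Var[simp]: "subst_term E i a (Var E j) = (if j = i then Const E a else Var E j)"
  by (simp add: subst_term_def)
lemma st_Const[simp]: "subst_term E i a (Const E b) = Const E b"
  by (simp add: subst_term_def)

lemma subst_unique:
  assumes vF: "valid E i a F" and vG: "valid E i a G"
  shows "E (opair E q y1) F \<Longrightarrow> E (opair E q y2) G \<Longrightarrow> y1 = y2"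
proof -
  define P where "P q \<longleftrightarrow> (\<exists>y1 y2. E (opair E q y1) F \<and> E (opair E q y2) G \<and> y1 \<noteq> y2)" for q
  have dP: "defbl C P"
  proof (rule defblI[where s="(\<lambda>_. undefined)(1 := F, 2 := G)" and c="\<lambda>_. undefined"
        and p="NEx 3 (NEx 4 (NAnd (NNeg (NEq 3 4)) (NEx 5 (NAnd (NOP 5 0 3) (NAnd (NMem 5 1) (NEx 6 (NAnd (NOP 6 0 4) (NMem 6 2))))))))"])
    fix a show "P a = nsat E C (((\<lambda>_. undefined)(1 := F, 2 := G))(0 := a)) (\<lambda>_. undefined)
       (NEx 3 (NEx 4 (NAnd (NNeg (NEq 3 4)) (NEx 5 (NAnd (NOP 5 0 3) (NAnd (NMem 5 1) (NEx 6 (NAnd (NOP 6 0 4) (NMem 6 2)))))))))"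
      unfolding P_def by auto
  qed
  have "P x \<Longrightarrow> E x (bigU (bigU F))" for x unfolding P_def using opair_in_U2 by blast
  then obtain B where B: "\<forall>x. E x B \<longleftrightarrow> P x"
    using set_of[OF dP] by blast
  have "\<exists>q0. E q0 B \<and> subf E q0 q" if qB: "E q B" for q
  proof -
    have "P q" using qB B by blast
    then obtain y1 y2 where h1: "E (opair E q y1) F" and h2: "E (opair E q y2) G" and ne: "y1 \<noteq> y2"
      unfolding P_def by blast
    have s1: "subst_ok E i a F (opair E q y1)" using vF h1 unfolding valid_def by blast
    have s2: "subst_ok E i a G (opair E q y2)" using vG h2 unfolding valid_def by blast
    from s1[unfolded subst_ok_pair] show ?thesis
    proof (elim disjE exE conjE)
      fix t s assume q: "q = FEq E t s" and y: "y1 = FEq E (subst_term E i a t) (subst_term E i a s)"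
      then show ?thesis using s2 ne by (simp only: q so_FEq) simp
    next
      fix t s assume q: "q = FMem E t s" and y: "y1 = FMem E (subst_term E i a t) (subst_term E i a s)"
      then show ?thesis using s2 ne by (simp only: q so_FMem) simp
    next
      fix q0 y0 assume q: "q = FNeg E q0" and y: "y1 = FNeg E y0" and a1: "E (opair E q0 y0) F"
      obtain z0 where z: "y2 = FNeg E z0" "E (opair E q0 z0) G" using s2 unfolding q so_FNeg by blast
      have "y0 \<noteq> z0" using ne y z by simp
      then have "P q0" unfolding P_def using a1 z by blast
      moreover have "subf E q0 q" unfolding subf_def q FNeg_def by blast
      ultimately show ?thesis using B by blast
    next
      fix q0 r0 y0 z0 assume q: "q = FDisj E q0 r0" and y: "y1 = FDisj E y0 z0"
        and a1: "E (opair E q0 y0) F" and a2: "E (opair E r0 z0) F"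
      obtain y0' z0' where z: "y2 = FDisj E y0' z0'" "E (opair E q0 y0') G" "E (opair E r0 z0') G"
        using s2 unfolding q so_FDisj by blast
      have "y0 \<noteq> y0' \<or> z0 \<noteq> z0'" using ne y z by simp
      then have "P q0 \<or> P r0" unfolding P_def using a1 a2 z by blast
      moreover have "subf E q0 q" "subf E r0 q" unfolding subf_def q FDisj_def by blast+
      ultimately show ?thesis using B by blast
    next
      fix q0 assume q: "q = FEx E i q0" and y: "y1 = q"
      have "y2 = q" using s2 unfolding q so_FEx by simp
      then show ?thesis using ne y by simp
    next
      fix j q0 y0 assume j: "j \<noteq> i" and q: "q = FEx E j q0" and y: "y1 = FEx E j y0"
        and a1: "E (opair E q0 y0) F"
      obtain y0' where z: "y2 = FEx E j y0'" "E (opair E q0 y0') G" using s2 j unfolding q so_FEx by blast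
      have "y0 \<noteq> y0'" using ne y z by simp
      then have "P q0" unfolding P_def using a1 z by blast
      moreover have "subf E q0 q" unfolding subf_def q FEx_def by blast
      ultimately show ?thesis using B by blast
    qed
  qed
  then have "\<And>x. \<not> E x B" using no_bad by blast
  then have "\<not> P q" using B by blast
  then show "E (opair E q y1) F \<Longrightarrow> E (opair E q y2) G \<Longrightarrow> y1 = y2" unfolding P_def by blast
qed

lemma is_subst_unique: "is_subst E q i a y1 \<Longrightarrow> is_subst E q i a y2 \<Longrightarrow> y1 = y2"
  unfolding is_subst_valid using subst_unique by blast

end

context gbm begin

lemma node_ok_simps[simp]:
  "node_ok E P S (FEq E t s) \<longleftrightarrow> P t \<and> P s"
  "node_ok E P S (FMem E t s) \<longleftrightarrow> P t \<and> P s"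
  "node_ok E P S (FNeg E p) \<longleftrightarrow> E p S"
  "node_ok E P S (FDisj E p q) \<longleftrightarrow> E p S \<and> E q S"
  "node_ok E P S (FEx E j p) \<longleftrightarrow> is_nat E j \<and> E p S"
  unfolding node_ok_def by auto

lemma node_ok_cases:
  "node_ok E P S y \<Longrightarrow>
   (\<And>t s. P t \<Longrightarrow> P s \<Longrightarrow> y = FEq E t s \<Longrightarrow> R) \<Longrightarrow>
   (\<And>t s. P t \<Longrightarrow> P s \<Longrightarrow> y = FMem E t s \<Longrightarrow> R) \<Longrightarrow>
   (\<And>p. E p S \<Longrightarrow> y = FNeg E p \<Longrightarrow> R) \<Longrightarrow>
   (\<And>p q. E p S \<Longrightarrow> E q S \<Longrightarrow> y = FDisj E p q \<Longrightarrow> R) \<Longrightarrow>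
   (\<And>j p. is_nat E j \<Longrightarrow> E p S \<Longrightarrow> y = FEx E j p \<Longrightarrow> R) \<Longrightarrow> R"
  unfolding node_ok_def by blast

lemma node_ok_mono: "node_ok E P S y \<Longrightarrow> subs E S S' \<Longrightarrow> node_ok E P S' y"
  unfolding subs_def by (erule node_ok_cases) simp_all

lemma is_term_simps[simp]:
  "is_term E (Var E j) \<longleftrightarrow> is_nat E j" "is_term E (Const E a)"
  unfolding is_term_def by simp_all

lemma is_term_st: "is_term E t \<Longrightarrow> is_term E (subst_term E i a t)"
  unfolding subst_term_def by simp

lemma subst_formula:
  assumes fq: "formula_gen E (is_term E) q" and sb: "is_subst E q i a y"
  shows "formula_gen E (is_term E) y"
proof -
  obtain Sq where qS: "E q Sq" and Sok: "\<forall>w. E w Sq \<longrightarrow> node_ok E (is_term E) Sq w"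
    using fq unfolding formula_gen_def by blast
  obtain Fs where yF: "E (opair E q y) Fs" and vF: "valid E i a Fs" using sb is_subst_valid by blast
  define P where "P w \<longleftrightarrow> (\<exists>q'. E q' Sq \<and> E (opair E q' w) Fs)" for w
  have dP: "defbl C P"
  proof (rule defblI[where s="(\<lambda>_. undefined)(1 := Sq, 2 := Fs)" and c="\<lambda>_. undefined"
        and p="NEx 3 (NAnd (NMem 3 1) (NEx 4 (NAnd (NOP 4 3 0) (NMem 4 2))))"])
    fix a show "P a = nsat E C (((\<lambda>_. undefined)(1 := Sq, 2 := Fs))(0 := a)) (\<lambda>_. undefined)
       (NEx 3 (NAnd (NMem 3 1) (NEx 4 (NAnd (NOP 4 3 0) (NMem 4 2)))))"
      unfolding P_def by auto
  qed
  have "P x \<Longrightarrow> E x (bigU (bigU Fs))" for x unfolding P_def using opair_in_U2 by blast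
  then obtain Y where Y: "\<forall>x. E x Y \<longleftrightarrow> P x" using set_of[OF dP] by blast
  define S' where "S' = union2 E Sq Y"
  have sub: "subs E Sq S'" unfolding subs_def S'_def by simp
  have YS: "E (opair E q' w) Fs \<Longrightarrow> E q' Sq \<Longrightarrow> E w S'" for q' w
    unfolding S'_def using Y P_def by auto
  have "node_ok E (is_term E) S' w" if wS: "E w S'" for w
  proof -
    have "E w Sq \<or> E w Y" using wS unfolding S'_def by simp
    then show ?thesis
    proof
      assume "E w Sq" then show ?thesis using Sok node_ok_mono sub by blast
    next
      assume "E w Y"
      then obtain q' where q'S: "E q' Sq" and pF: "E (opair E q' w) Fs" using Y P_def by blast
      have so: "subst_ok E i a Fs (opair E q' w)" using vF pF unfolding valid_def by blast
      have nq: "node_ok E (is_term E) Sq q'" using Sok q'S by blast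
      show ?thesis
      proof (rule node_ok_cases[OF nq])
        fix t s assume "is_term E t" "is_term E s" "q' = FEq E t s"
        then show ?thesis using so by (simp add: is_term_st)
      next
        fix t s assume "is_term E t" "is_term E s" "q' = FMem E t s"
        then show ?thesis using so by (simp add: is_term_st)
      next
        fix p assume pS: "E p Sq" and q': "q' = FNeg E p"
        then obtain y0 where "w = FNeg E y0" "E (opair E p y0) Fs" using so by auto
        then show ?thesis using YS pS by simp
      next
        fix p r assume pS: "E p Sq" "E r Sq" and q': "q' = FDisj E p r"
        then obtain y0 z0 where "w = FDisj E y0 z0" "E (opair E p y0) Fs" "E (opair E r z0) Fs" using so by auto
        then show ?thesis using YS pS by simp
      next
        fix j p assume jn: "is_nat E j" and pS: "E p Sq" and q': "q' = FEx E j p"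
        show ?thesis
        proof (cases "j = i")
          case True
          then have "w = FEx E j p" using so q' by simp
          then show ?thesis using jn pS sub unfolding subs_def by simp
        next
          case False
          then obtain y0 where "w = FEx E j y0" "E (opair E p y0) Fs" using so q' by auto
          then show ?thesis using YS pS jn by simp
        qed
      qed
    qed
  qed
  moreover have "E y S'" using YS yF qS by blast
  ultimately show ?thesis unfolding formula_gen_def by blast
qed

end

context gbm begin

lemma depth_ok_simps[simp]:
  "depth_ok E F (opair E (FEq E t s) d) \<longleftrightarrow> d = emp E"
  "depth_ok E F (opair E (FMem E t s) d) \<longleftrightarrow> d = emp E"
  "depth_ok E F (opair E (FNeg E q0) d) \<longleftrightarrow> (\<exists>d0. d = succ E d0 \<and> E (opair E q0 d0) F)"
  "depth_ok E F (opair E (FDisj E q0 r0) d) \<longleftrightarrow> (\<exists>d1 d2. d = succ E (union2 E d1 d2) \<and> E (opair E q0 d1) F \<and> E (opair E r0 d2) F)"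
  "depth_ok E F (opair E (FEx E j q0) d) \<longleftrightarrow> (\<exists>d0. d = succ E d0 \<and> E (opair E q0 d0) F)"
  unfolding depth_ok_def by simp_all

lemma depth_ok_mono: "depth_ok E F p \<Longrightarrow> subs E F G \<Longrightarrow> depth_ok E G p"
  unfolding depth_ok_def subs_def by (elim disjE exE conjE; blast)

lemma free_ok_simps[simp]:
  "free_ok E F (opair E (FEq E t s) B) \<longleftrightarrow> term_bound E B t \<and> term_bound E B s"
  "free_ok E F (opair E (FMem E t s) B) \<longleftrightarrow> term_bound E B t \<and> term_bound E B s"
  "free_ok E F (opair E (FNeg E q0) B) \<longleftrightarrow> E (opair E q0 B) F"
  "free_ok E F (opair E (FDisj E q0 r0) B) \<longleftrightarrow> E (opair E q0 B) F \<and> E (opair E r0 B) F"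
  "free_ok E F (opair E (FEx E j q0) B) \<longleftrightarrow> E (opair E q0 (union2 E B (upair E j j))) F"
  unfolding free_ok_def by simp_all

lemma free_ok_mono: "free_ok E F p \<Longrightarrow> subs E F G \<Longrightarrow> free_ok E G p"
  unfolding free_ok_def subs_def by (elim disjE exE conjE; blast)

lemma free_ok_cases:
  assumes "free_ok E F (opair E q B)"
  obtains (atom) t s where "q = FEq E t s \<or> q = FMem E t s" "term_bound E B t" "term_bound E B s"
  | (neg) q0 where "q = FNeg E q0" "E (opair E q0 B) F"
  | (disj) q0 r0 where "q = FDisj E q0 r0" "E (opair E q0 B) F" "E (opair E r0 B) F"
  | (ex) j q0 where "q = FEx E j q0" "E (opair E q0 (union2 E B (upair E j j))) F"
  using assms unfolding free_ok_def opair_inj by (elim disjE exE conjE) blast+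

lemma subst_ok_cases:
  assumes "subst_ok E i a F (opair E q y)"
  obtains (eq) t s where "q = FEq E t s" "y = FEq E (subst_term E i a t) (subst_term E i a s)"
  | (mem) t s where "q = FMem E t s" "y = FMem E (subst_term E i a t) (subst_term E i a s)"
  | (neg) q0 y0 where "q = FNeg E q0" "y = FNeg E y0" "E (opair E q0 y0) F"
  | (disj) q0 r0 y0 z0 where "q = FDisj E q0 r0" "y = FDisj E y0 z0" "E (opair E q0 y0) F" "E (opair E r0 z0) F"
  | (exi) q0 where "q = FEx E i q0" "y = q"
  | (exj) j q0 y0 where "j \<noteq> i" "q = FEx E j q0" "y = FEx E j y0" "E (opair E q0 y0) F"
  using assms unfolding subst_ok_pair by (elim disjE exE conjE) blast+

definition diff :: "'s \<Rightarrow> 's \<Rightarrow> 's" where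
  "diff B i = (THE D. \<forall>z. E z D \<longleftrightarrow> E z B \<and> z \<noteq> i)"

lemma diff_mem[simp]: "E z (diff B i) \<longleftrightarrow> E z B \<and> z \<noteq> i"
proof -
  have dP: "defbl C (\<lambda>z. z \<noteq> i)"
    by (rule defblI[where s="(\<lambda>_. i)" and c="\<lambda>_. undefined" and p="NNeg (NEq 0 1)"]) simp
  obtain D where D: "\<forall>z. E z D \<longleftrightarrow> E z B \<and> z \<noteq> i" using sep[OF dP] by blast
  have "diff B i = D" unfolding diff_def
    apply (rule the_equality)
     apply (simp add: D)
    apply (rule ext_ax) using D by auto
  then show ?thesis using D by simp
qed

lemma diff_eq_iff: "D = diff B i \<longleftrightarrow> (\<forall>z. E z D \<longleftrightarrow> E z B \<and> z \<noteq> i)"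
proof
  assume "\<forall>z. E z D \<longleftrightarrow> E z B \<and> z \<noteq> i" then show "D = diff B i" by (intro ext_ax) simp
qed simp

lemma subst_depth:
  assumes hd: "has_depth E q d" and sb: "is_subst E q i a y"
  shows "has_depth E y d"
proof -
  have fq: "is_formula E q" and "\<exists>Fd. E (opair E q d) Fd \<and> (\<forall>p. E p Fd \<longrightarrow> depth_ok E Fd p)"
    using hd unfolding has_depth_def by blast+
  then obtain Fd where qd: "E (opair E q d) Fd" and Fok: "\<forall>p. E p Fd \<longrightarrow> depth_ok E Fd p" by blast
  obtain Fs where yF: "E (opair E q y) Fs" and vF: "valid E i a Fs" using sb is_subst_valid by blast
  define P where "P w \<longleftrightarrow> (\<exists>y' d' q'. w = opair E y' d' \<and> E (opair E q' d') Fd \<and> E (opair E q' y') Fs)" for w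
  have dP: "defbl C P"
  proof (rule defblI[where s="(\<lambda>_. undefined)(1 := Fd, 2 := Fs)" and c="\<lambda>_. undefined"
        and p="NEx 3 (NEx 4 (NEx 5 (NAnd (NOP 0 3 4) (NAnd (NEx 6 (NAnd (NOP 6 5 4) (NMem 6 1))) (NEx 7 (NAnd (NOP 7 5 3) (NMem 7 2)))))))"])
    fix a show "P a = nsat E C (((\<lambda>_. undefined)(1 := Fd, 2 := Fs))(0 := a)) (\<lambda>_. undefined)
       (NEx 3 (NEx 4 (NEx 5 (NAnd (NOP 0 3 4) (NAnd (NEx 6 (NAnd (NOP 6 5 4) (NMem 6 1))) (NEx 7 (NAnd (NOP 7 5 3) (NMem 7 2))))))))"
      unfolding P_def by auto
  qed
  have "P x \<Longrightarrow> E x (pow (pow (union2 E (bigU (bigU Fs)) (bigU (bigU Fd)))))" for x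
  proof -
    assume "P x"
    then obtain y' d' q' where x: "x = opair E y' d'" and h1: "E (opair E q' d') Fd" and h2: "E (opair E q' y') Fs"
      unfolding P_def by blast
    show ?thesis unfolding x by (rule opair_bound) (use opair_in_U2[OF h1] opair_in_U2[OF h2] in simp_all)
  qed
  then obtain Z where Z: "\<forall>x. E x Z \<longleftrightarrow> P x" using set_of[OF dP] by blast
  define F' where "F' = union2 E Fd Z"
  have sub: "subs E Fd F'" unfolding subs_def F'_def by simp
  have ZF: "E (opair E q' d') Fd \<Longrightarrow> E (opair E q' y') Fs \<Longrightarrow> E (opair E y' d') F'" for q' d' y'
    unfolding F'_def using Z unfolding P_def by auto
  have "depth_ok E F' w" if wF: "E w F'" for w
  proof -
    have "E w Fd \<or> E w Z" using wF unfolding F'_def by simp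
    then show ?thesis
    proof
      assume "E w Fd" then show ?thesis using Fok depth_ok_mono sub by blast
    next
      assume "E w Z"
      then obtain y' d' q' where w: "w = opair E y' d'" and h1: "E (opair E q' d') Fd" and h2: "E (opair E q' y') Fs"
        using Z unfolding P_def by blast
      have so: "subst_ok E i a Fs (opair E q' y')" using vF h2 unfolding valid_def by blast
      have dq: "depth_ok E Fd (opair E q' d')" using Fok h1 by blast
      from so show ?thesis
      proof (cases rule: subst_ok_cases)
        case (eq t s) then show ?thesis using dq w by simp
      next
        case (mem t s) then show ?thesis using dq w by simp
      next
        case (neg q0 y0)
        then obtain d0 where "d' = succ E d0" "E (opair E q0 d0) Fd" using dq by auto
        then show ?thesis using neg w ZF by auto
      next
        case (disj q0 r0 y0 z0)
        then obtain d1 d2 where "d' = succ E (union2 E d1 d2)" "E (opair E q0 d1) Fd" "E (opair E r0 d2) Fd"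
          using dq by auto
        moreover have "E (opair E y0 d1) F'" "E (opair E z0 d2) F'" using ZF calculation disj by blast+
        ultimately show ?thesis using disj w by auto
      next
        case (exi q0)
        then have "E w Fd" using w h1 by simp
        then show ?thesis using Fok depth_ok_mono sub by blast
      next
        case (exj j q0 y0)
        then obtain d0 where "d' = succ E d0" "E (opair E q0 d0) Fd" using dq by auto
        then show ?thesis using exj w ZF by auto
      qed
    qed
  qed
  moreover have "E (opair E y d) F'" using ZF qd yF by blast
  moreover have "is_formula E y" using subst_formula fq sb unfolding is_formula_def by blast
  ultimately show ?thesis unfolding has_depth_def by blast
qed


lemma tb_st: "term_bound E B t \<Longrightarrow> term_bound E (diff B i) (subst_term E i a t)"
  unfolding term_bound_def subst_term_def by auto

lemma diff_union_self: "union2 E (diff B i) (upair E i i) = union2 E B (upair E i i)"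
  by (rule ext_ax) auto

lemma diff_union_other: "j \<noteq> i \<Longrightarrow> diff (union2 E B (upair E j j)) i = union2 E (diff B i) (upair E j j)"
  by (rule ext_ax) auto

lemma subst_free:
  assumes fw: "free_within E q B" and sb: "is_subst E q i a y"
  shows "free_within E y (diff B i)"
proof -
  obtain Ff where qB: "E (opair E q B) Ff" and Fok: "\<forall>p. E p Ff \<longrightarrow> free_ok E Ff p"
    using fw unfolding free_within_def by blast
  obtain Fs where yF: "E (opair E q y) Fs" and vF: "valid E i a Fs" using sb is_subst_valid by blast
  define P where "P w \<longleftrightarrow> (\<exists>y' D q' B'. w = opair E y' D \<and> (\<forall>z. E z D \<longleftrightarrow> E z B' \<and> z \<noteq> i) \<and>
      E (opair E q' B') Ff \<and> E (opair E q' y') Fs)" for w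
  have dP: "defbl C P"
  proof (rule defblI[where s="(\<lambda>_. undefined)(1 := Ff, 2 := Fs, 3 := i)" and c="\<lambda>_. undefined"
        and p="NEx 4 (NEx 5 (NEx 6 (NEx 7 (NAnd (NOP 0 4 5) (NAnd (NAll 8 (NIff (NMem 8 5) (NAnd (NMem 8 7) (NNeg (NEq 8 3))))) (NAnd (NEx 9 (NAnd (NOP 9 6 7) (NMem 9 1))) (NEx 10 (NAnd (NOP 10 6 4) (NMem 10 2)))))))))"])
    fix a show "P a = nsat E C (((\<lambda>_. undefined)(1 := Ff, 2 := Fs, 3 := i))(0 := a)) (\<lambda>_. undefined)
       (NEx 4 (NEx 5 (NEx 6 (NEx 7 (NAnd (NOP 0 4 5) (NAnd (NAll 8 (NIff (NMem 8 5) (NAnd (NMem 8 7) (NNeg (NEq 8 3))))) (NAnd (NEx 9 (NAnd (NOP 9 6 7) (NMem 9 1))) (NEx 10 (NAnd (NOP 10 6 4) (NMem 10 2))))))))))"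
      unfolding P_def by auto
  qed
  have "P x \<Longrightarrow> E x (pow (pow (union2 E (bigU (bigU Fs)) (pow (bigU (bigU (bigU Ff)))))))" for x
  proof -
    assume "P x"
    then obtain y' D q' B' where x: "x = opair E y' D" and D: "\<forall>z. E z D \<longleftrightarrow> E z B' \<and> z \<noteq> i"
       and h1: "E (opair E q' B') Ff" and h2: "E (opair E q' y') Fs"
      unfolding P_def by blast
    have "E D (pow (bigU (bigU (bigU Ff))))" using D opair_in_U2[OF h1] by auto
    then show ?thesis unfolding x by (rule opair_bound[rotated]) (use opair_in_U2[OF h2] in simp_all)
  qed
  then obtain Z where Z: "\<forall>x. E x Z \<longleftrightarrow> P x" using set_of[OF dP] by blast
  define F' where "F' = union2 E Ff Z"
  have sub: "subs E Ff F'" unfolding subs_def F'_def by simp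
  have ZF: "E (opair E q' B') Ff \<Longrightarrow> E (opair E q' y') Fs \<Longrightarrow> E (opair E y' (diff B' i)) F'" for q' B' y'
    unfolding F'_def using Z unfolding P_def by auto
  have "free_ok E F' w" if wF: "E w F'" for w
  proof -
    have "E w Ff \<or> E w Z" using wF unfolding F'_def by simp
    then show ?thesis
    proof
      assume "E w Ff" then show ?thesis using Fok free_ok_mono sub by blast
    next
      assume "E w Z"
      then obtain y' D q' B' where w: "w = opair E y' D" and D: "\<forall>z. E z D \<longleftrightarrow> E z B' \<and> z \<noteq> i"
          and h1: "E (opair E q' B') Ff" and h2: "E (opair E q' y') Fs"
        using Z unfolding P_def by blast
      have Dd: "D = diff B' i" using D diff_eq_iff by blast
      have so: "subst_ok E i a Fs (opair E q' y')" using vF h2 unfolding valid_def by blast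
      have fq: "free_ok E Ff (opair E q' B')" using Fok h1 by blast
      from so show ?thesis
      proof (cases rule: subst_ok_cases)
        case (eq t s) then show ?thesis using fq w Dd by (simp add: tb_st)
      next
        case (mem t s) then show ?thesis using fq w Dd by (simp add: tb_st)
      next
        case (neg q0 y0)
        then have "E (opair E q0 B') Ff" using fq by simp
        then have "E (opair E y0 (diff B' i)) F'" using ZF neg by blast
        then show ?thesis using neg w Dd by simp
      next
        case (disj q0 r0 y0 z0)
        then have "E (opair E q0 B') Ff" "E (opair E r0 B') Ff" using fq by simp_all
        then have "E (opair E y0 (diff B' i)) F'" "E (opair E z0 (diff B' i)) F'" using ZF disj by blast+
        then show ?thesis using disj w Dd by simp
      next
        case (exi q0)
        then have "E (opair E q0 (union2 E B' (upair E i i))) Ff" using fq by simp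
        then have "E (opair E q0 (union2 E (diff B' i) (upair E i i))) F'"
          using sub unfolding subs_def diff_union_self by blast
        then show ?thesis using exi w Dd by simp
      next
        case (exj j q0 y0)
        then have "E (opair E q0 (union2 E B' (upair E j j))) Ff" using fq by simp
        then have "E (opair E y0 (diff (union2 E B' (upair E j j)) i)) F'" using ZF exj by blast
        then show ?thesis using exj w Dd diff_union_other[of j i B'] by simp
      qed
    qed
  qed
  moreover have "E (opair E y (diff B i)) F'" using ZF qB yF by blast
  ultimately show ?thesis unfolding free_within_def by blast
qed

lemma subst_id:
  assumes fw: "free_within E q B" and iB: "\<not> E i B"
  shows "is_subst E q i a q"
proof -
  obtain Ff where qB: "E (opair E q B) Ff" and Fok: "\<forall>p. E p Ff \<longrightarrow> free_ok E Ff p"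
    using fw unfolding free_within_def by blast
  define P where "P w \<longleftrightarrow> (\<exists>q' B'. w = opair E q' q' \<and> \<not> E i B' \<and> E (opair E q' B') Ff)" for w
  have dP: "defbl C P"
  proof (rule defblI[where s="(\<lambda>_. undefined)(1 := Ff, 2 := i)" and c="\<lambda>_. undefined"
        and p="NEx 3 (NEx 4 (NAnd (NOP 0 3 3) (NAnd (NNeg (NMem 2 4)) (NEx 5 (NAnd (NOP 5 3 4) (NMem 5 1))))))"])
    fix a show "P a = nsat E C (((\<lambda>_. undefined)(1 := Ff, 2 := i))(0 := a)) (\<lambda>_. undefined)
       (NEx 3 (NEx 4 (NAnd (NOP 0 3 3) (NAnd (NNeg (NMem 2 4)) (NEx 5 (NAnd (NOP 5 3 4) (NMem 5 1)))))))"
      unfolding P_def by auto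
  qed
  have "P x \<Longrightarrow> E x (pow (pow (union2 E (bigU (bigU Ff)) (bigU (bigU Ff)))))" for x
  proof -
    assume "P x"
    then obtain q' B' where x: "x = opair E q' q'" and h1: "E (opair E q' B') Ff"
      unfolding P_def by blast
    show ?thesis unfolding x by (rule opair_bound) (use opair_in_U2[OF h1] in simp_all)
  qed
  then obtain Z where Z: "\<forall>x. E x Z \<longleftrightarrow> P x" using set_of[OF dP] by blast
  have ZI: "E (opair E q' B') Ff \<Longrightarrow> \<not> E i B' \<Longrightarrow> E (opair E q' q') Z" for q' B'
    using Z unfolding P_def by blast
  have "subst_ok E i a Z w" if wZ: "E w Z" for w
  proof -
    obtain q' B' where w: "w = opair E q' q'" and iB': "\<not> E i B'" and h1: "E (opair E q' B') Ff"
      using Z wZ unfolding P_def by blast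
    have fq: "free_ok E Ff (opair E q' B')" using Fok h1 by blast
    from fq show ?thesis
    proof (cases rule: free_ok_cases)
      case (atom t s)
      have "subst_term E i a t = t" "subst_term E i a s = s"
        using atom(2,3) iB' unfolding term_bound_def subst_term_def by auto
      then show ?thesis using atom(1) w by auto
    next
      case (neg q0) then show ?thesis using w ZI iB' by simp
    next
      case (disj q0 r0) then show ?thesis using w ZI iB' by simp
    next
      case (ex j q0)
      show ?thesis
      proof (cases "j = i")
        case True then show ?thesis using ex w by simp
      next
        case False
        then have "\<not> E i (union2 E B' (upair E j j))" using iB' by simp
        then have "E (opair E q0 q0) Z" using ZI ex by blast
        then show ?thesis using ex w False by simp
      qed
    qed
  qed
  moreover have "E (opair E q q) Z" using ZI qB iB by blast
  ultimately show ?thesis unfolding is_subst_valid valid_def by blast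
qed

lemma st_comm: "i \<noteq> j \<Longrightarrow> subst_term E j b (subst_term E i a t) = subst_term E i a (subst_term E j b t)"
  unfolding subst_term_def by auto

lemma subst_comm:
  assumes ij: "i \<noteq> j" and v1: "valid E i a F1" and v2: "valid E j b F2" and v3: "valid E j b G1"
    and h1: "E (opair E q y1) F1" and h2: "E (opair E y1 y2) F2" and h3: "E (opair E q z1) G1"
  shows "is_subst E z1 i a y2"
proof -
  define P where "P w \<longleftrightarrow> (\<exists>z1' y2' q' y1'. w = opair E z1' y2' \<and> E (opair E q' y1') F1 \<and>
      E (opair E y1' y2') F2 \<and> E (opair E q' z1') G1)" for w
  have dP: "defbl C P"
  proof (rule defblI[where s="(\<lambda>_. undefined)(1 := F1, 2 := F2, 3 := G1)" and c="\<lambda>_. undefined"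
        and p="NEx 4 (NEx 5 (NEx 6 (NEx 7 (NAnd (NOP 0 4 5) (NAnd (NEx 8 (NAnd (NOP 8 6 7) (NMem 8 1))) (NAnd (NEx 9 (NAnd (NOP 9 7 5) (NMem 9 2))) (NEx 10 (NAnd (NOP 10 6 4) (NMem 10 3)))))))))"])
    fix a show "P a = nsat E C (((\<lambda>_. undefined)(1 := F1, 2 := F2, 3 := G1))(0 := a)) (\<lambda>_. undefined)
       (NEx 4 (NEx 5 (NEx 6 (NEx 7 (NAnd (NOP 0 4 5) (NAnd (NEx 8 (NAnd (NOP 8 6 7) (NMem 8 1))) (NAnd (NEx 9 (NAnd (NOP 9 7 5) (NMem 9 2))) (NEx 10 (NAnd (NOP 10 6 4) (NMem 10 3))))))))))"
      unfolding P_def by auto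
  qed
  have "P x \<Longrightarrow> E x (pow (pow (union2 E (bigU (bigU G1)) (bigU (bigU F2)))))" for x
  proof -
    assume "P x"
    then obtain z1' y2' q' y1' where x: "x = opair E z1' y2'" and "E (opair E y1' y2') F2" "E (opair E q' z1') G1"
      unfolding P_def by blast
    then show ?thesis unfolding x by (intro opair_bound) (use opair_in_U2 in blast)+
  qed
  then obtain Z where Z: "\<forall>x. E x Z \<longleftrightarrow> P x" using set_of[OF dP] by blast
  define H where "H = union2 E F1 Z"
  have sub: "subs E F1 H" unfolding subs_def H_def by simp
  have ZI: "E (opair E q' y1') F1 \<Longrightarrow> E (opair E y1' y2') F2 \<Longrightarrow> E (opair E q' z1') G1 \<Longrightarrow> E (opair E z1' y2') H"
    for q' y1' y2' z1' unfolding H_def using Z unfolding P_def by auto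
  have "subst_ok E i a H w" if wH: "E w H" for w
  proof -
    have "E w F1 \<or> E w Z" using wH unfolding H_def by simp
    then show ?thesis
    proof
      assume "E w F1" then show ?thesis using v1 sub subst_ok_mono unfolding valid_def by blast
    next
      assume "E w Z"
      then obtain z1' y2' q' y1' where w: "w = opair E z1' y2'" and a1: "E (opair E q' y1') F1"
        and a2: "E (opair E y1' y2') F2" and a3: "E (opair E q' z1') G1"
        using Z unfolding P_def by blast
      have s1: "subst_ok E i a F1 (opair E q' y1')" using v1 a1 unfolding valid_def by blast
      have s2: "subst_ok E j b F2 (opair E y1' y2')" using v2 a2 unfolding valid_def by blast
      have s3: "subst_ok E j b G1 (opair E q' z1')" using v3 a3 unfolding valid_def by blast
      from s1 show ?thesis
      proof (cases rule: subst_ok_cases)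
        case (eq t s) then show ?thesis using s2 s3 w ij by (simp add: st_comm)
      next
        case (mem t s) then show ?thesis using s2 s3 w ij by (simp add: st_comm)
      next
        case (neg q0 y0)
        obtain y20 where y20: "y2' = FNeg E y20" "E (opair E y0 y20) F2" using s2 neg by auto
        obtain z10 where z10: "z1' = FNeg E z10" "E (opair E q0 z10) G1" using s3 neg by auto
        have "E (opair E z10 y20) H" using ZI neg y20 z10 by blast
        then show ?thesis using w y20 z10 by simp
      next
        case (disj q0 r0 y0 u0)
        obtain y20 u20 where y20: "y2' = FDisj E y20 u20" "E (opair E y0 y20) F2" "E (opair E u0 u20) F2"
          using s2 disj by auto
        obtain z10 w10 where z10: "z1' = FDisj E z10 w10" "E (opair E q0 z10) G1" "E (opair E r0 w10) G1"
          using s3 disj by auto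
        have "E (opair E z10 y20) H" "E (opair E w10 u20) H" using ZI disj y20 z10 by blast+
        then show ?thesis using w y20 z10 by simp
      next
        case (exi q0)
        obtain y20 where y20: "y2' = FEx E i y20" "E (opair E q0 y20) F2" using s2 exi ij by auto
        obtain z10 where z10: "z1' = FEx E i z10" "E (opair E q0 z10) G1" using s3 exi ij by auto
        have "y20 = z10" using subst_unique[OF v2 v3] y20 z10 by blast
        then show ?thesis using w y20 z10 by simp
      next
        case (exj k q0 y0)
        show ?thesis
        proof (cases "k = j")
          case True
          then have y2: "y2' = y1'" using s2 exj by simp
          have z1: "z1' = q'" using s3 exj True by simp
          have "E (opair E q0 y0) H" using exj sub unfolding subs_def by blast
          then show ?thesis using w y2 z1 exj by simp
        next
          case False
          obtain y20 where y20: "y2' = FEx E k y20" "E (opair E y0 y20) F2" using s2 exj False by auto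
          obtain z10 where z10: "z1' = FEx E k z10" "E (opair E q0 z10) G1" using s3 exj False by auto
          have "E (opair E z10 y20) H" using ZI exj y20 z10 by blast
          then show ?thesis using w y20 z10 exj by simp
        qed
      qed
    qed
  qed
  moreover have "E (opair E z1 y2) H" using ZI h1 h2 h3 by blast
  ultimately show ?thesis unfolding is_subst_valid valid_def by blast
qed

end

definition ST :: "nat \<Rightarrow> nat \<Rightarrow> nf" where
  "ST x y = NDisj (NAnd (NEq x 12) (NEq y 11)) (NAnd (NNeg (NEq x 12)) (NEq y x))"

definition SOK :: nf where
  "SOK = (NEx 21 (NEx 22 (NAnd (NOP 20 21 22) (NOr [(NEx 23 (NEx 24 (NEx 25 (NEx 26 (NEx 27 (NEx 28 (NAnd (NOP 21 14 27) (NAnd (NOP 27 23 24) (NAnd (NOP 22 14 28) (NAnd (NOP 28 25 26) (NAnd (ST 23 25) (ST 24 26)))))))))))), (NEx 23 (NEx 24 (NEx 25 (NEx 26 (NEx 27 (NEx 28 (NAnd (NOP 21 15 27) (NAnd (NOP 27 23 24) (NAnd (NOP 22 15 28) (NAnd (NOP 28 25 26) (NAnd (ST 23 25) (ST 24 26)))))))))))), (NEx 23 (NEx 24 (NEx 25 (NAnd (NOP 21 16 23) (NAnd (NOP 22 16 24) (NAnd (NOP 25 23 24) (NMem 25 10))))))), (NEx 23 (NEx 24 (NEx 25 (NEx 26 (NEx 27 (NEx 28 (NEx 29 (NEx 30 (NAnd (NOP 21 17 27) (NAnd (NOP 27 23 24) (NAnd (NOP 22 17 28) (NAnd (NOP 28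 25 26) (NAnd (NOP 29 23 25) (NAnd (NMem 29 10) (NAnd (NOP 30 24 26) (NMem 30 10)))))))))))))))), (NEx 23 (NEx 24 (NAnd (NOP 21 18 24) (NAnd (NOP 24 13 23) (NEq 22 21))))), (NEx 23 (NEx 24 (NEx 25 (NEx 26 (NEx 27 (NEx 28 (NAnd (NNeg (NEq 23 13)) (NAnd (NOP 21 18 26) (NAnd (NOP 26 23 24) (NAnd (NOP 22 18 27) (NAnd (NOP 27 23 25) (NAnd (NOP 28 24 25) (NMem 28 10)))))))))))))]))))"

definition VALIDF :: nf where "VALIDF = NAll 20 (NImp (NMem 20 10) SOK)"

context gbm begin

lemma nsat_ST[simp]: "nsat E C s c (ST x y) \<longleftrightarrow> (s x = s 12 \<and> s y = s 11) \<or> (s x \<noteq> s 12 \<and> s y = s x)"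
  unfolding ST_def by auto

definition SRel :: "'s \<Rightarrow> 's \<Rightarrow> 's \<Rightarrow> 's \<Rightarrow> bool" where
  "SRel i a t t' \<longleftrightarrow> (t = Var E i \<and> t' = Const E a) \<or> (t \<noteq> Var E i \<and> t' = t)"

lemma SRel_iff: "SRel i a t t' \<longleftrightarrow> t' = subst_term E i a t"
  unfolding SRel_def subst_term_def by auto

definition sok_rel :: "'s \<Rightarrow> 's \<Rightarrow> 's \<Rightarrow> 's \<Rightarrow> bool" where
  "sok_rel i a F p \<longleftrightarrow> (\<exists>u v. p = opair E u v \<and> (
    (\<exists>t s t' s'. u = opair E (num E 2) (opair E t s) \<and> v = opair E (num E 2) (opair E t' s') \<and> SRel i a t t' \<and> SRel i a s s') \<or>
    (\<exists>t s t' s'. u = opair E (num E 3) (opair E t s) \<and> v = opair E (num E 3) (opair E t' s') \<and> SRel i a t t' \<and> SRel i a s s') \<or>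
    (\<exists>q q'. u = opair E (num E 4) q \<and> v = opair E (num E 4) q' \<and> E (opair E q q') F) \<or>
    (\<exists>q r q' r'. u = opair E (num E 5) (opair E q r) \<and> v = opair E (num E 5) (opair E q' r') \<and>
        E (opair E q q') F \<and> E (opair E r r') F) \<or>
    (\<exists>q. u = opair E (num E 6) (opair E i q) \<and> v = u) \<or>
    (\<exists>j q q'. j \<noteq> i \<and> u = opair E (num E 6) (opair E j q) \<and> v = opair E (num E 6) (opair E j q') \<and> E (opair E q q') F)))"

lemma sok_rel_iff: "sok_rel i a F p \<longleftrightarrow> subst_ok E i a F p"
  unfolding sok_rel_def subst_ok_def SRel_iff FEq_def FMem_def FNeg_def FDisj_def FEx_def
  by (intro iffI; elim exE disjE conjE; simp)

definition envV :: "'s \<Rightarrow> 's \<Rightarrow> 's \<Rightarrow> nat \<Rightarrow> 's" where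
  "envV F i a = (\<lambda>_. undefined)(10 := F, 11 := Const E a, 12 := Var E i, 13 := i,
     14 := num E 2, 15 := num E 3, 16 := num E 4, 17 := num E 5, 18 := num E 6, 19 := num E 1)"

lemma nsat_SOK: "nsat E C (s(20 := p)) c SOK \<longleftrightarrow> sok_rel (s 13) a (s 10) p"
  if "s 11 = Const E a" "s 12 = Var E (s 13)" "s 14 = num E 2" "s 15 = num E 3" "s 16 = num E 4"
     "s 17 = num E 5" "s 18 = num E 6"
  using that unfolding SOK_def sok_rel_def SRel_def
  by simp


declare num.simps[simp del]

definition cinv :: "'s \<Rightarrow> 's" where "cinv ca = (THE a. ca = Const E a)"
lemma cinv_Const[simp]: "cinv (opair E (num E 1) a) = a"
  unfolding cinv_def Const_def by simp
lemma cinv_Const'[simp]: "cinv (opair E (num E (Suc 0)) a) = a"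
  using cinv_Const by simp

lemma nsat_VALIDF: "nsat E C s c VALIDF \<longleftrightarrow> valid E (s 13) (cinv (s 11)) (s 10)"
  if "s 11 = opair E (num E 1) a" "s 12 = Var E (s 13)" "s 14 = num E 2" "s 15 = num E 3" "s 16 = num E 4"
     "s 17 = num E 5" "s 18 = num E 6"
proof -
  have "s 11 = Const E a" using that(1) by (simp add: Const_def)
  then have "\<And>p. nsat E C (s(20 := p)) c SOK \<longleftrightarrow> sok_rel (s 13) a (s 10) p"
    using nsat_SOK that by blast
  moreover have "cinv (s 11) = a" using that(1) cinv_Const by metis
  ultimately show ?thesis unfolding VALIDF_def valid_def by (simp add: sok_rel_iff)
qed

definition SUBF :: nf where
  "SUBF = NEx 1 (NEx 2 (NAnd (NOP 0 1 2) (NEx 3 (NEx 4 (NAnd (NOP 2 3 4) (NEx 11 (NAnd (NOP 11 19 1) (NEx 10 (NAnd (NMem 2 10) VALIDF)))))))))"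

lemma SUB_class: "\<exists>X. \<forall>w. C w X \<longleftrightarrow> (\<exists>a q y. w = opair E a (opair E q y) \<and> is_subst E q i a y)"
proof -
  define env :: "nat \<Rightarrow> 's" where "env = (\<lambda>_. undefined)(12 := Var E i, 13 := i,
     14 := num E 2, 15 := num E 3, 16 := num E 4, 17 := num E 5, 18 := num E 6, 19 := num E 1)"
  have h1: "\<And>w. nsat E C (env(0 := w)) (\<lambda>_. undefined) SUBF \<longleftrightarrow>
     (\<exists>a t. w = opair E a t \<and> (\<exists>q y. t = opair E q y \<and> (\<exists>ca. ca = opair E (num E 1) a \<and>
       (\<exists>F. E t F \<and> nsat E C (env(0 := w, 1 := a, 2 := t, 3 := q, 4 := y, 11 := ca, 10 := F)) (\<lambda>_. undefined) VALIDF))))"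
    unfolding SUBF_def env_def by simp
  have h2: "\<And>w a t q y ca F. ca = opair E (num E 1) a \<Longrightarrow>
     nsat E C (env(0 := w, 1 := a, 2 := t, 3 := q, 4 := y, 11 := ca, 10 := F)) (\<lambda>_. undefined) VALIDF
     \<longleftrightarrow> valid E i a F"
    by (subst nsat_VALIDF) (simp_all add: env_def)
  have eq: "\<And>w. nsat E C (env(0 := w)) (\<lambda>_. undefined) SUBF \<longleftrightarrow>
     (\<exists>a q y. w = opair E a (opair E q y) \<and> is_subst E q i a y)"
    unfolding h1 is_subst_valid using h2 by auto
  show ?thesis using defbl_nsat[of env "\<lambda>_. undefined" SUBF] unfolding defbl_def eq by blast
qed


lemma valid_sing: "subst_ok E i a (sing p) p \<Longrightarrow> valid E i a (sing p)"
  unfolding valid_def by simp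

lemma valid_union: "valid E i a F \<Longrightarrow> valid E i a G \<Longrightarrow> valid E i a (union2 E F G)"
  unfolding valid_def using subst_ok_mono unfolding subs_def by (metis union2_mem)

lemma valid_add: "valid E i a F \<Longrightarrow> subst_ok E i a (union2 E F (sing p)) p \<Longrightarrow> valid E i a (union2 E F (sing p))"
proof -
  assume v: "valid E i a F" and s: "subst_ok E i a (union2 E F (sing p)) p"
  show ?thesis unfolding valid_def
  proof (intro allI impI)
    fix x assume "E x (union2 E F (sing p))"
    then have "E x F \<or> x = p" by simp
    then show "subst_ok E i a (union2 E F (sing p)) x"
    proof
      assume "E x F" then show ?thesis using v subst_ok_mono unfolding valid_def subs_def by (metis union2_mem)
    qed (use s in simp)
  qed
qed

lemma is_subst_FEq: "is_subst E (FEq E t s) i a (FEq E (subst_term E i a t) (subst_term E i a s))"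
  unfolding is_subst_valid by (intro exI[of _ "sing (opair E (FEq E t s) (FEq E (subst_term E i a t) (subst_term E i a s)))"] conjI valid_sing) simp_all

lemma is_subst_FMem: "is_subst E (FMem E t s) i a (FMem E (subst_term E i a t) (subst_term E i a s))"
  unfolding is_subst_valid by (intro exI[of _ "sing (opair E (FMem E t s) (FMem E (subst_term E i a t) (subst_term E i a s)))"] conjI valid_sing) simp_all

lemma is_subst_FEx_same: "is_subst E (FEx E i q) i a (FEx E i q)"
  unfolding is_subst_valid by (intro exI[of _ "sing (opair E (FEx E i q) (FEx E i q))"] conjI valid_sing) simp_all

lemma is_subst_FNeg: "is_subst E q i a y \<Longrightarrow> is_subst E (FNeg E q) i a (FNeg E y)"
proof -
  assume "is_subst E q i a y"
  then obtain F where F: "E (opair E q y) F" "valid E i a F" unfolding is_subst_valid by blast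
  let ?G = "union2 E F (sing (opair E (FNeg E q) (FNeg E y)))"
  have "valid E i a ?G" by (rule valid_add) (use F in simp_all)
  then show ?thesis unfolding is_subst_valid by (intro exI[of _ ?G]) simp
qed

lemma is_subst_FEx_other: "j \<noteq> i \<Longrightarrow> is_subst E q i a y \<Longrightarrow> is_subst E (FEx E j q) i a (FEx E j y)"
proof -
  assume j: "j \<noteq> i" and "is_subst E q i a y"
  then obtain F where F: "E (opair E q y) F" "valid E i a F" unfolding is_subst_valid by blast
  let ?G = "union2 E F (sing (opair E (FEx E j q) (FEx E j y)))"
  have "valid E i a ?G" by (rule valid_add) (use F j in simp_all)
  then show ?thesis unfolding is_subst_valid by (intro exI[of _ ?G]) simp
qed

lemma is_subst_FDisj: "is_subst E q i a y \<Longrightarrow> is_subst E r i a z \<Longrightarrow> is_subst E (FDisj E q r) i a (FDisj E y z)"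
proof -
  assume "is_subst E q i a y" "is_subst E r i a z"
  then obtain F G where F: "E (opair E q y) F" "valid E i a F" and G: "E (opair E r z) G" "valid E i a G"
    unfolding is_subst_valid by blast
  let ?G = "union2 E (union2 E F G) (sing (opair E (FDisj E q r) (FDisj E y z)))"
  have "valid E i a ?G" by (rule valid_add) (use F G valid_union in simp_all)
  then show ?thesis unfolding is_subst_valid by (intro exI[of _ ?G]) simp
qed

lemma subst_exists:
  assumes fq: "formula_gen E P q"
  shows "\<exists>y. is_subst E q i a y"
proof -
  obtain Sq where qS: "E q Sq" and Sok: "\<forall>w. E w Sq \<longrightarrow> node_ok E P Sq w"
    using fq unfolding formula_gen_def by blast
  obtain X where X: "\<forall>w. C w X \<longleftrightarrow> (\<exists>a q y. w = opair E a (opair E q y) \<and> is_subst E q i a y)"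
    using SUB_class by blast
  have XI: "C (opair E a (opair E q' y)) X \<longleftrightarrow> is_subst E q' i a y" for q' y
    using X by simp
  define Q where "Q q' \<longleftrightarrow> \<not> (\<exists>y. C (opair E a (opair E q' y)) X)" for q'
  have dQ: "defbl C Q"
  proof (rule defblI[where s="(\<lambda>_. undefined)(1 := a)" and c="\<lambda>_. X"
        and p="NNeg (NEx 2 (NEx 3 (NAnd (NOP 3 0 2) (NEx 4 (NAnd (NOP 4 1 3) (NIn 4 0))))))"])
    fix w show "Q w = nsat E C (((\<lambda>_. undefined)(1 := a))(0 := w)) (\<lambda>_. X)
      (NNeg (NEx 2 (NEx 3 (NAnd (NOP 3 0 2) (NEx 4 (NAnd (NOP 4 1 3) (NIn 4 0)))))))"
      unfolding Q_def by auto
  qed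
  obtain B where B: "\<forall>x. E x B \<longleftrightarrow> E x Sq \<and> Q x" using sep[OF dQ] by blast
  have BI: "E x B \<longleftrightarrow> E x Sq \<and> \<not> (\<exists>y. is_subst E x i a y)" for x
    using B unfolding Q_def XI by blast
  have "\<exists>q0. E q0 B \<and> subf E q0 q'" if qB: "E q' B" for q'
  proof (rule ccontr)
    assume nb: "\<not> (\<exists>q0. E q0 B \<and> subf E q0 q')"
    have q'S: "E q' Sq" and nos: "\<not> (\<exists>y. is_subst E q' i a y)" using qB BI by blast+
    have hs: "E q0 Sq \<Longrightarrow> subf E q0 q' \<Longrightarrow> \<exists>y. is_subst E q0 i a y" for q0
      using nb BI by blast
    have nq: "node_ok E P Sq q'" using Sok q'S by blast
    show False
    proof (rule node_ok_cases[OF nq])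
      fix t s assume "q' = FEq E t s" then show False using nos is_subst_FEq by blast
    next
      fix t s assume "q' = FMem E t s" then show False using nos is_subst_FMem by blast
    next
      fix p assume pS: "E p Sq" and q': "q' = FNeg E p"
      have "subf E p q'" unfolding subf_def q' FNeg_def by blast
      then obtain y0 where "is_subst E p i a y0" using hs pS by blast
      then show False using nos is_subst_FNeg q' by blast
    next
      fix p r assume pS: "E p Sq" "E r Sq" and q': "q' = FDisj E p r"
      have "subf E p q'" "subf E r q'" unfolding subf_def q' FDisj_def by blast+
      then obtain y0 z0 where "is_subst E p i a y0" "is_subst E r i a z0" using hs pS by blast
      then show False using nos is_subst_FDisj q' by blast
    next
      fix j p assume pS: "E p Sq" and q': "q' = FEx E j p"
      show False
      proof (cases "j = i")
        case True then show False using nos is_subst_FEx_same q' by blast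
      next
        case False
        have "subf E p q'" unfolding subf_def q' FEx_def by blast
        then obtain y0 where "is_subst E p i a y0" using hs pS by blast
        then show False using nos is_subst_FEx_other[OF False] q' by blast
      qed
    qed
  qed
  then have "\<not> E q B" using no_bad by blast
  then show ?thesis using BI qS by blast
qed

end

context gbm begin

definition sb :: "'s \<Rightarrow> 's \<Rightarrow> 's \<Rightarrow> 's" where
  "sb q i a = (THE y. is_subst E q i a y)"

lemma sb_eq: "is_subst E q i a y \<Longrightarrow> sb q i a = y"
  unfolding sb_def using is_subst_unique by blast

lemma sb_is: "formula_gen E P q \<Longrightarrow> is_subst E q i a (sb q i a)"
  using subst_exists sb_eq by metis

lemma if_FEq[simp]: "is_formula E (FEq E t s) \<longleftrightarrow> is_term E t \<and> is_term E s"
proof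
  assume "is_formula E (FEq E t s)"
  then obtain S where "E (FEq E t s) S" "\<forall>y. E y S \<longrightarrow> node_ok E (is_term E) S y"
    unfolding is_formula_def formula_gen_def by blast
  then show "is_term E t \<and> is_term E s" by force
next
  assume h: "is_term E t \<and> is_term E s"
  show "is_formula E (FEq E t s)" unfolding is_formula_def formula_gen_def
    by (intro exI[of _ "sing (FEq E t s)"]) (use h in simp)
qed

lemma if_FMem[simp]: "is_formula E (FMem E t s) \<longleftrightarrow> is_term E t \<and> is_term E s"
proof
  assume "is_formula E (FMem E t s)"
  then obtain S where "E (FMem E t s) S" "\<forall>y. E y S \<longrightarrow> node_ok E (is_term E) S y"
    unfolding is_formula_def formula_gen_def by blast
  then show "is_term E t \<and> is_term E s" by force
next
  assume h: "is_term E t \<and> is_term E s"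
  show "is_formula E (FMem E t s)" unfolding is_formula_def formula_gen_def
    by (intro exI[of _ "sing (FMem E t s)"]) (use h in simp)
qed

lemma fg_add: "(\<forall>y. E y S \<longrightarrow> node_ok E P S y) \<Longrightarrow> node_ok E P (union2 E S (sing x)) x \<Longrightarrow>
  formula_gen E P x"
proof -
  assume a: "\<forall>y. E y S \<longrightarrow> node_ok E P S y" and b: "node_ok E P (union2 E S (sing x)) x"
  have "subs E S (union2 E S (sing x))" unfolding subs_def by simp
  then have "\<forall>y. E y (union2 E S (sing x)) \<longrightarrow> node_ok E P (union2 E S (sing x)) y"
    using a b node_ok_mono by auto
  then show ?thesis unfolding formula_gen_def by (intro exI[of _ "union2 E S (sing x)"]) simp
qed

lemma if_FNeg[simp]: "is_formula E (FNeg E q) \<longleftrightarrow> is_formula E q"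
proof
  assume "is_formula E (FNeg E q)"
  then obtain S where "E (FNeg E q) S" "\<forall>y. E y S \<longrightarrow> node_ok E (is_term E) S y"
    unfolding is_formula_def formula_gen_def by blast
  then show "is_formula E q" unfolding is_formula_def formula_gen_def by force
next
  assume "is_formula E q"
  then obtain S where S: "E q S" "\<forall>y. E y S \<longrightarrow> node_ok E (is_term E) S y"
    unfolding is_formula_def formula_gen_def by blast
  show "is_formula E (FNeg E q)" unfolding is_formula_def by (rule fg_add[OF S(2)]) (use S in simp)
qed

lemma if_FEx[simp]: "is_formula E (FEx E j q) \<longleftrightarrow> is_nat E j \<and> is_formula E q"
proof
  assume "is_formula E (FEx E j q)"
  then obtain S where "E (FEx E j q) S" "\<forall>y. E y S \<longrightarrow> node_ok E (is_term E) S y"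
    unfolding is_formula_def formula_gen_def by blast
  then show "is_nat E j \<and> is_formula E q" unfolding is_formula_def formula_gen_def by force
next
  assume h: "is_nat E j \<and> is_formula E q"
  then obtain S where S: "E q S" "\<forall>y. E y S \<longrightarrow> node_ok E (is_term E) S y"
    unfolding is_formula_def formula_gen_def by blast
  show "is_formula E (FEx E j q)" unfolding is_formula_def by (rule fg_add[OF S(2)]) (use S h in simp)
qed

lemma if_FDisj[simp]: "is_formula E (FDisj E q r) \<longleftrightarrow> is_formula E q \<and> is_formula E r"
proof
  assume "is_formula E (FDisj E q r)"
  then obtain S where "E (FDisj E q r) S" "\<forall>y. E y S \<longrightarrow> node_ok E (is_term E) S y"
    unfolding is_formula_def formula_gen_def by blast
  then show "is_formula E q \<and> is_formula E r" unfolding is_formula_def formula_gen_def by force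
next
  assume "is_formula E q \<and> is_formula E r"
  then obtain S1 S2 where S1: "E q S1" "\<forall>y. E y S1 \<longrightarrow> node_ok E (is_term E) S1 y"
    and S2: "E r S2" "\<forall>y. E y S2 \<longrightarrow> node_ok E (is_term E) S2 y"
    unfolding is_formula_def formula_gen_def by blast
  have s1: "subs E S1 (union2 E S1 S2)" "subs E S2 (union2 E S1 S2)" unfolding subs_def by simp_all
  have "\<forall>y. E y (union2 E S1 S2) \<longrightarrow> node_ok E (is_term E) (union2 E S1 S2) y"
    using S1(2) S2(2) node_ok_mono s1 by auto
  then show "is_formula E (FDisj E q r)" unfolding is_formula_def by (rule fg_add) (use S1 S2 in simp)
qed

lemma if_sb[simp]: "is_formula E q \<Longrightarrow> is_formula E (sb q i a)"
  using subst_formula sb_is unfolding is_formula_def by blast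

lemma sb_FEq[simp]: "sb (FEq E t s) i a = FEq E (subst_term E i a t) (subst_term E i a s)"
  by (rule sb_eq) (rule is_subst_FEq)
lemma sb_FMem[simp]: "sb (FMem E t s) i a = FMem E (subst_term E i a t) (subst_term E i a s)"
  by (rule sb_eq) (rule is_subst_FMem)
lemma sb_FEx_same[simp]: "sb (FEx E i q) i a = FEx E i q"
  by (rule sb_eq) (rule is_subst_FEx_same)
lemma sb_FNeg[simp]: "is_formula E q \<Longrightarrow> sb (FNeg E q) i a = FNeg E (sb q i a)"
  by (rule sb_eq) (rule is_subst_FNeg, rule sb_is, simp add: is_formula_def)
lemma sb_FDisj[simp]: "is_formula E q \<Longrightarrow> is_formula E r \<Longrightarrow> sb (FDisj E q r) i a = FDisj E (sb q i a) (sb r i a)"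
  by (rule sb_eq) (rule is_subst_FDisj; rule sb_is, simp add: is_formula_def)
lemma sb_FEx_other[simp]: "j \<noteq> i \<Longrightarrow> is_formula E q \<Longrightarrow> sb (FEx E j q) i a = FEx E j (sb q i a)"
  by (rule sb_eq) (rule is_subst_FEx_other, assumption, rule sb_is, simp add: is_formula_def)

lemma sb_id: "free_within E q B \<Longrightarrow> \<not> E i B \<Longrightarrow> sb q i a = q"
  using subst_id sb_eq by blast

lemma sb_free: "free_within E q B \<Longrightarrow> is_formula E q \<Longrightarrow> free_within E (sb q i a) (diff B i)"
  using subst_free sb_is unfolding is_formula_def by blast

lemma sb_depth: "has_depth E q d \<Longrightarrow> has_depth E (sb q i a) d"
  using subst_depth sb_is unfolding has_depth_def is_formula_def by blast

lemma sb_comm: "i \<noteq> j \<Longrightarrow> is_formula E q \<Longrightarrow> sb (sb q i a) j b = sb (sb q j b) i a"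
proof -
  assume ij: "i \<noteq> j" and fq: "is_formula E q"
  have fq': "formula_gen E (is_term E) q" using fq unfolding is_formula_def .
  have s1: "is_subst E q i a (sb q i a)" using sb_is[OF fq'] .
  have fy: "formula_gen E (is_term E) (sb q i a)" using if_sb[OF fq] unfolding is_formula_def .
  have s2: "is_subst E (sb q i a) j b (sb (sb q i a) j b)" using sb_is[OF fy] .
  have s3: "is_subst E q j b (sb q j b)" using sb_is[OF fq'] .
  obtain F1 where F1: "E (opair E q (sb q i a)) F1" "valid E i a F1" using s1 is_subst_valid by blast
  obtain F2 where F2: "E (opair E (sb q i a) (sb (sb q i a) j b)) F2" "valid E j b F2" using s2 is_subst_valid by blast
  obtain G1 where G1: "E (opair E q (sb q j b)) G1" "valid E j b G1" using s3 is_subst_valid by blast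
  have "is_subst E (sb q j b) i a (sb (sb q i a) j b)"
    using subst_comm[OF ij F1(2) F2(2) G1(2) F1(1) F2(1) G1(1)] .
  then show ?thesis using sb_eq by metis
qed

end

context gbm begin

lemma if_FAnd[simp]: "is_formula E (FAnd E p q) \<longleftrightarrow> is_formula E p \<and> is_formula E q"
  by (simp add: FAnd_def)
lemma if_FImp[simp]: "is_formula E (FImp E p q) \<longleftrightarrow> is_formula E p \<and> is_formula E q"
  by (simp add: FImp_def)
lemma if_FIff[simp]: "is_formula E (FIff E p q) \<longleftrightarrow> is_formula E p \<and> is_formula E q"
  by (auto simp add: FIff_def)
lemma if_FAll[simp]: "is_formula E (FAll E j p) \<longleftrightarrow> is_nat E j \<and> is_formula E p"
  by (simp add: FAll_def)

lemma sb_FAnd[simp]: "is_formula E p \<Longrightarrow> is_formula E q \<Longrightarrow> sb (FAnd E p q) i a = FAnd E (sb p i a) (sb q i a)"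
  by (simp add: FAnd_def)
lemma sb_FImp[simp]: "is_formula E p \<Longrightarrow> is_formula E q \<Longrightarrow> sb (FImp E p q) i a = FImp E (sb p i a) (sb q i a)"
  by (simp add: FImp_def)
lemma sb_FIff[simp]: "is_formula E p \<Longrightarrow> is_formula E q \<Longrightarrow> sb (FIff E p q) i a = FIff E (sb p i a) (sb q i a)"
  by (simp add: FIff_def)
lemma sb_FAll_same[simp]: "sb (FAll E i q) i a = FAll E i q"
  by (simp add: FAll_def sb_eq is_subst_FNeg is_subst_FEx_same)
lemma sb_FAll_other[simp]: "j \<noteq> i \<Longrightarrow> is_nat E j \<Longrightarrow> is_formula E q \<Longrightarrow> sb (FAll E j q) i a = FAll E j (sb q i a)"
  by (simp add: FAll_def)

lemma hd_FNeg: "has_depth E (FNeg E q) d \<Longrightarrow> \<exists>d0. d = succ E d0 \<and> has_depth E q d0"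
  unfolding has_depth_def by (auto simp: depth_ok_simps) (metis depth_ok_simps(3))

lemma hd_FDisj: "has_depth E (FDisj E q r) d \<Longrightarrow> \<exists>d1 d2. d = succ E (union2 E d1 d2) \<and> has_depth E q d1 \<and> has_depth E r d2"
  unfolding has_depth_def by (auto simp: depth_ok_simps) (metis depth_ok_simps(4))

lemma hd_FEx: "has_depth E (FEx E j q) d \<Longrightarrow> \<exists>d0. d = succ E d0 \<and> has_depth E q d0"
  unfolding has_depth_def by (auto simp: depth_ok_simps) (metis depth_ok_simps(5))

lemma fw_FNeg: "free_within E (FNeg E q) B \<Longrightarrow> free_within E q B"
  unfolding free_within_def by (metis free_ok_simps(3))
lemma fw_FDisj: "free_within E (FDisj E q r) B \<Longrightarrow> free_within E q B \<and> free_within E r B"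
  unfolding free_within_def by (metis free_ok_simps(4))
lemma fw_FEx: "free_within E (FEx E j q) B \<Longrightarrow> free_within E q (union2 E B (upair E j j))"
  unfolding free_within_def by (metis free_ok_simps(5))


lemma fwI_FNeg: "free_within E q B \<Longrightarrow> free_within E (FNeg E q) B"
proof -
  assume "free_within E q B"
  then obtain F where F: "E (opair E q B) F" "\<forall>p. E p F \<longrightarrow> free_ok E F p" unfolding free_within_def by blast
  let ?G = "union2 E F (sing (opair E (FNeg E q) B))"
  have "subs E F ?G" unfolding subs_def by simp
  then have "\<forall>p. E p ?G \<longrightarrow> free_ok E ?G p" using F free_ok_mono by auto
  then show ?thesis unfolding free_within_def by (intro exI[of _ ?G]) simp
qed

lemma fwI_FEx: "free_within E q (union2 E B (upair E j j)) \<Longrightarrow> free_within E (FEx E j q) B"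
proof -
  assume "free_within E q (union2 E B (upair E j j))"
  then obtain F where F: "E (opair E q (union2 E B (upair E j j))) F" "\<forall>p. E p F \<longrightarrow> free_ok E F p" unfolding free_within_def by blast
  let ?G = "union2 E F (sing (opair E (FEx E j q) B))"
  have "subs E F ?G" unfolding subs_def by simp
  then have "\<forall>p. E p ?G \<longrightarrow> free_ok E ?G p" using F free_ok_mono by auto
  then show ?thesis unfolding free_within_def by (intro exI[of _ ?G]) simp
qed

lemma fwI_FDisj: "free_within E q B \<Longrightarrow> free_within E r B \<Longrightarrow> free_within E (FDisj E q r) B"
proof -
  assume "free_within E q B" "free_within E r B"
  then obtain F G where F: "E (opair E q B) F" "\<forall>p. E p F \<longrightarrow> free_ok E F p"
    and G: "E (opair E r B) G" "\<forall>p. E p G \<longrightarrow> free_ok E G p" unfolding free_within_def by blast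
  let ?G = "union2 E (union2 E F G) (sing (opair E (FDisj E q r) B))"
  have "subs E F ?G" "subs E G ?G" unfolding subs_def by simp_all
  then have "\<forall>p. E p ?G \<longrightarrow> free_ok E ?G p" using F G free_ok_mono by auto
  then show ?thesis unfolding free_within_def by (intro exI[of _ ?G]) simp
qed

lemma fwI_FEq: "term_bound E B t \<Longrightarrow> term_bound E B s \<Longrightarrow> free_within E (FEq E t s) B"
  unfolding free_within_def by (intro exI[of _ "sing (opair E (FEq E t s) B)"]) simp
lemma fwI_FMem: "term_bound E B t \<Longrightarrow> term_bound E B s \<Longrightarrow> free_within E (FMem E t s) B"
  unfolding free_within_def by (intro exI[of _ "sing (opair E (FMem E t s) B)"]) simp

lemma tb_Var: "E j B \<Longrightarrow> term_bound E B (Var E j)" unfolding term_bound_def by blast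
lemma tb_Const: "term_bound E B (Const E a)" unfolding term_bound_def by blast

lemma fwI_FAnd: "free_within E p B \<Longrightarrow> free_within E q B \<Longrightarrow> free_within E (FAnd E p q) B"
  unfolding FAnd_def by (intro fwI_FNeg fwI_FDisj)
lemma fwI_FImp: "free_within E p B \<Longrightarrow> free_within E q B \<Longrightarrow> free_within E (FImp E p q) B"
  unfolding FImp_def by (intro fwI_FNeg fwI_FDisj)
lemma fwI_FIff: "free_within E p B \<Longrightarrow> free_within E q B \<Longrightarrow> free_within E (FIff E p q) B"
  unfolding FIff_def by (intro fwI_FAnd fwI_FImp)
lemma fwI_FAll: "free_within E q (union2 E B (upair E j j)) \<Longrightarrow> free_within E (FAll E j q) B"
  unfolding FAll_def by (intro fwI_FNeg fwI_FEx)

lemma tb_mono: "term_bound E B t \<Longrightarrow> term_bound E (union2 E B B') t"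
  unfolding term_bound_def by auto

lemma union_assoc_swap: "union2 E (union2 E B (upair E j j)) B' = union2 E (union2 E B B') (upair E j j)"
  by (rule ext_ax) auto

lemma fw_mono: "free_within E q B \<Longrightarrow> (\<And>x. E x B \<Longrightarrow> E x B') \<Longrightarrow> free_within E q B'"
proof -
  assume fw: "free_within E q B" and sub: "\<And>x. E x B \<Longrightarrow> E x B'"
  obtain F where qB: "E (opair E q B) F" and Fok: "\<forall>p. E p F \<longrightarrow> free_ok E F p"
    using fw unfolding free_within_def by blast
  define P where "P w \<longleftrightarrow> (\<exists>q' B'' U. w = opair E q' U \<and> (\<forall>z. E z U \<longleftrightarrow> E z B'' \<or> E z B') \<and> E (opair E q' B'') F)" for w
  have dP: "defbl C P"
  proof (rule defblI[where s="(\<lambda>_. undefined)(1 := F, 2 := B')" and c="\<lambda>_. undefined"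
        and p="NEx 3 (NEx 4 (NEx 5 (NAnd (NOP 0 3 5) (NAnd (NAll 6 (NIff (NMem 6 5) (NDisj (NMem 6 4) (NMem 6 2)))) (NEx 7 (NAnd (NOP 7 3 4) (NMem 7 1)))))))"])
    fix a show "P a = nsat E C (((\<lambda>_. undefined)(1 := F, 2 := B'))(0 := a)) (\<lambda>_. undefined)
       (NEx 3 (NEx 4 (NEx 5 (NAnd (NOP 0 3 5) (NAnd (NAll 6 (NIff (NMem 6 5) (NDisj (NMem 6 4) (NMem 6 2)))) (NEx 7 (NAnd (NOP 7 3 4) (NMem 7 1))))))))"
      unfolding P_def by auto
  qed
  have "P x \<Longrightarrow> E x (pow (pow (union2 E (bigU (bigU F)) (pow (union2 E (bigU (bigU (bigU F))) B')))))" for x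
  proof -
    assume "P x"
    then obtain q' B'' U where x: "x = opair E q' U" and U: "\<forall>z. E z U \<longleftrightarrow> E z B'' \<or> E z B'"
       and h1: "E (opair E q' B'') F" unfolding P_def by blast
    have "E U (pow (union2 E (bigU (bigU (bigU F))) B'))" using U opair_in_U2[OF h1] by auto
    then show ?thesis unfolding x by (rule opair_bound[rotated]) (use opair_in_U2[OF h1] in simp_all)
  qed
  then obtain Z where Z: "\<forall>x. E x Z \<longleftrightarrow> P x" using set_of[OF dP] by blast
  have ZI: "E (opair E q' B'') F \<Longrightarrow> E (opair E q' (union2 E B'' B')) Z" for q' B''
    using Z unfolding P_def by auto
  have "free_ok E Z w" if wZ: "E w Z" for w
  proof -
    obtain q' B'' U where w: "w = opair E q' U" and U: "\<forall>z. E z U \<longleftrightarrow> E z B'' \<or> E z B'"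
       and h1: "E (opair E q' B'') F" using Z wZ unfolding P_def by blast
    have Ueq: "U = union2 E B'' B'" using U by (intro ext_ax) simp
    have fq: "free_ok E F (opair E q' B'')" using Fok h1 by blast
    from fq show ?thesis
    proof (cases rule: free_ok_cases)
      case (atom t s) then show ?thesis using w Ueq tb_mono by auto
    next
      case (neg q0) then show ?thesis using w Ueq ZI by simp
    next
      case (disj q0 r0) then show ?thesis using w Ueq ZI by simp
    next
      case (ex j q0) then show ?thesis using w Ueq ZI[of q0 "union2 E B'' (upair E j j)"]
        by (simp add: union_assoc_swap)
    qed
  qed
  moreover have "E (opair E q (union2 E B B')) Z" using ZI qB by blast
  moreover have "union2 E B B' = B'" using sub by (intro ext_ax) auto
  ultimately show ?thesis unfolding free_within_def by auto
qed

lemma subset_trans: "subset E a b \<Longrightarrow> subset E b c \<Longrightarrow> subset E a c"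
  unfolding subset_def by blast
lemma subset_succ: "subset E d (succ E d)" unfolding subset_def by simp
lemma subset_succ_un1: "subset E d1 (succ E (union2 E d1 d2))" unfolding subset_def by simp
lemma subset_succ_un2: "subset E d2 (succ E (union2 E d1 d2))" unfolding subset_def by simp

lemma inD_FNeg: "in_Depth E k (FNeg E q) \<Longrightarrow> in_Depth E k q"
proof -
  assume h: "in_Depth E k (FNeg E q)"
  then have f: "is_formula E (FNeg E q)" and fw: "free_within E (FNeg E q) (emp E)"
    and ex: "\<exists>d. has_depth E (FNeg E q) d \<and> subset E d k"
    unfolding in_Depth_def is_sentence_def by simp_all
  then obtain d where hd: "has_depth E (FNeg E q) d" and dk: "subset E d k" by blast
  obtain d0 where d0: "d = succ E d0" "has_depth E q d0" using hd_FNeg[OF hd] by blast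
  have "subset E d0 k" using subset_trans[OF subset_succ[of d0]] dk d0 by simp
  moreover have "free_within E q (emp E)" using fw_FNeg[OF fw] .
  moreover have "is_formula E q" using f by simp
  ultimately show ?thesis unfolding in_Depth_def is_sentence_def using d0 by blast
qed

lemma inD_FDisj: "in_Depth E k (FDisj E q r) \<Longrightarrow> in_Depth E k q \<and> in_Depth E k r"
proof -
  assume h: "in_Depth E k (FDisj E q r)"
  then have f: "is_formula E (FDisj E q r)" and fw: "free_within E (FDisj E q r) (emp E)"
    and ex: "\<exists>d. has_depth E (FDisj E q r) d \<and> subset E d k"
    unfolding in_Depth_def is_sentence_def by simp_all
  then obtain d where hd: "has_depth E (FDisj E q r) d" and dk: "subset E d k" by blast
  obtain d1 d2 where d: "d = succ E (union2 E d1 d2)" "has_depth E q d1" "has_depth E r d2"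
    using hd_FDisj[OF hd] by blast
  have "subset E d1 k" using subset_trans[OF subset_succ_un1[of d1 d2]] dk d by simp
  moreover have "subset E d2 k" using subset_trans[OF subset_succ_un2[of d2 d1]] dk d by simp
  moreover have "free_within E q (emp E)" "free_within E r (emp E)" using fw_FDisj[OF fw] by simp_all
  moreover have "is_formula E q" "is_formula E r" using f by simp_all
  ultimately show ?thesis unfolding in_Depth_def is_sentence_def using d by blast
qed

lemma diff_single: "diff (union2 E (emp E) (upair E i i)) i = emp E"
  by (rule ext_ax) simp

lemma inD_FEx: "in_Depth E k (FEx E i q) \<Longrightarrow> in_Depth E k (sb q i a)"
proof -
  assume h: "in_Depth E k (FEx E i q)"
  then have f: "is_formula E q" and fw0: "free_within E (FEx E i q) (emp E)"
    unfolding in_Depth_def is_sentence_def by simp_all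
  have fw: "free_within E q (union2 E (emp E) (upair E i i))" using fw_FEx[OF fw0] .
  obtain d where hd: "has_depth E (FEx E i q) d" and dk: "subset E d k" using h unfolding in_Depth_def by blast
  obtain d0 where d0: "d = succ E d0" "has_depth E q d0" using hd_FEx[OF hd] by blast
  have "free_within E (sb q i a) (emp E)" using sb_free[OF fw f, of i a] diff_single by simp
  moreover have "has_depth E (sb q i a) d0" using sb_depth d0 by blast
  moreover have "subset E d0 k" using d0 dk subset_trans subset_succ by blast
  ultimately show ?thesis unfolding in_Depth_def is_sentence_def using f by auto
qed

end

locale gbt = gbm E C for E :: "'s \<Rightarrow> 's \<Rightarrow> bool" and C :: "'s \<Rightarrow> 'c \<Rightarrow> bool" +
  fixes T :: 'c and k :: 's
  assumes tc: "truth_class E C T k"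
begin

lemma T_inD: "C x T \<Longrightarrow> in_Depth E k x"
  using conjunct1[OF tc[unfolded truth_class_def]] by blast

lemmas tcx = conjunct2[OF tc[unfolded truth_class_def], rule_format]

lemma tc_FNeg: "in_Depth E k (FNeg E q) \<Longrightarrow> C (FNeg E q) T \<longleftrightarrow> \<not> C q T"
  using tcx[of "FNeg E q"] by simp
lemma tc_FDisj: "in_Depth E k (FDisj E q r) \<Longrightarrow> C (FDisj E q r) T \<longleftrightarrow> C q T \<or> C r T"
  using tcx[of "FDisj E q r"] by simp
lemma tc_FEq: "in_Depth E k (FEq E (Const E a) (Const E b)) \<Longrightarrow> C (FEq E (Const E a) (Const E b)) T \<longleftrightarrow> a = b"
  using tcx[of "FEq E (Const E a) (Const E b)"] by simp
lemma tc_FMem: "in_Depth E k (FMem E (Const E a) (Const E b)) \<Longrightarrow> C (FMem E (Const E a) (Const E b)) T \<longleftrightarrow> E a b"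
  using tcx[of "FMem E (Const E a) (Const E b)"] by simp
lemma tc_FEx: "in_Depth E k (FEx E i q) \<Longrightarrow> C (FEx E i q) T \<longleftrightarrow> (\<exists>a. C (sb q i a) T)"
proof -
  assume h: "in_Depth E k (FEx E i q)"
  then have f: "is_formula E q" unfolding in_Depth_def is_sentence_def by simp
  have "C (FEx E i q) T \<longleftrightarrow> (\<exists>a y. is_subst E q i a y \<and> C y T)"
    using tcx[OF h] by simp
  also have "\<dots> \<longleftrightarrow> (\<exists>a. C (sb q i a) T)"
    using sb_eq sb_is f unfolding is_formula_def by metis
  finally show ?thesis .
qed

lemma inD_FAnd: "in_Depth E k (FAnd E p q) \<Longrightarrow> in_Depth E k p \<and> in_Depth E k q"
  unfolding FAnd_def using inD_FNeg inD_FDisj by blast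
lemma tc_FAnd: "in_Depth E k (FAnd E p q) \<Longrightarrow> C (FAnd E p q) T \<longleftrightarrow> C p T \<and> C q T"
proof -
  assume h: "in_Depth E k (FAnd E p q)"
  have h1: "in_Depth E k (FDisj E (FNeg E p) (FNeg E q))" using h unfolding FAnd_def by (rule inD_FNeg)
  have h2: "in_Depth E k (FNeg E p)" "in_Depth E k (FNeg E q)" using inD_FDisj[OF h1] by simp_all
  show ?thesis unfolding FAnd_def
    using tc_FNeg[OF h[unfolded FAnd_def]] tc_FDisj[OF h1] tc_FNeg[OF h2(1)] tc_FNeg[OF h2(2)] by simp
qed
lemma inD_FImp: "in_Depth E k (FImp E p q) \<Longrightarrow> in_Depth E k p \<and> in_Depth E k q"
  unfolding FImp_def using inD_FNeg inD_FDisj by blast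
lemma tc_FImp: "in_Depth E k (FImp E p q) \<Longrightarrow> C (FImp E p q) T \<longleftrightarrow> (C p T \<longrightarrow> C q T)"
proof -
  assume h: "in_Depth E k (FImp E p q)"
  have h2: "in_Depth E k (FNeg E p)" using inD_FDisj[OF h[unfolded FImp_def]] by simp
  show ?thesis unfolding FImp_def using tc_FDisj[OF h[unfolded FImp_def]] tc_FNeg[OF h2] by simp
qed
lemma inD_FIff: "in_Depth E k (FIff E p q) \<Longrightarrow> in_Depth E k p \<and> in_Depth E k q"
  unfolding FIff_def using inD_FAnd inD_FImp by blast
lemma tc_FIff: "in_Depth E k (FIff E p q) \<Longrightarrow> C (FIff E p q) T \<longleftrightarrow> (C p T \<longleftrightarrow> C q T)"
proof -
  assume h: "in_Depth E k (FIff E p q)"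
  have h1: "in_Depth E k (FImp E p q)" "in_Depth E k (FImp E q p)" using inD_FAnd[OF h[unfolded FIff_def]] by simp_all
  show ?thesis unfolding FIff_def using tc_FAnd[OF h[unfolded FIff_def]] tc_FImp[OF h1(1)] tc_FImp[OF h1(2)] by blast
qed
lemma inD_FAll: "in_Depth E k (FAll E i q) \<Longrightarrow> in_Depth E k (sb q i a)"
proof -
  assume h: "in_Depth E k (FAll E i q)"
  then have f: "is_formula E q" unfolding in_Depth_def is_sentence_def FAll_def by simp
  have "in_Depth E k (FEx E i (FNeg E q))" using h unfolding FAll_def by (rule inD_FNeg)
  then have "in_Depth E k (sb (FNeg E q) i a)" by (rule inD_FEx)
  then show ?thesis using f inD_FNeg by simp
qed
lemma tc_FAll: "in_Depth E k (FAll E i q) \<Longrightarrow> C (FAll E i q) T \<longleftrightarrow> (\<forall>a. C (sb q i a) T)"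
proof -
  assume h: "in_Depth E k (FAll E i q)"
  then have f: "is_formula E q" unfolding in_Depth_def is_sentence_def FAll_def by simp
  have h1: "in_Depth E k (FEx E i (FNeg E q))" using h unfolding FAll_def by (rule inD_FNeg)
  have "C (FAll E i q) T \<longleftrightarrow> \<not> (\<exists>a. C (sb (FNeg E q) i a) T)"
    unfolding FAll_def using tc_FNeg[OF h[unfolded FAll_def]] tc_FEx[OF h1] by simp
  also have "\<dots> \<longleftrightarrow> (\<forall>a. C (sb q i a) T)"
  proof -
    have "C (sb (FNeg E q) i a) T \<longleftrightarrow> \<not> C (sb q i a) T" for a
      using f inD_FEx[OF h1, of a] tc_FNeg by simp
    then show ?thesis by blast
  qed
  finally show ?thesis .
qed

end

context gbm begin

lemma fg_mono: "formula_gen E P q \<Longrightarrow> (\<And>t. P t \<Longrightarrow> P' t) \<Longrightarrow> formula_gen E P' q"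
proof -
  assume f: "formula_gen E P q" and m: "\<And>t. P t \<Longrightarrow> P' t"
  obtain S where S: "E q S" "\<forall>y. E y S \<longrightarrow> node_ok E P S y" using f unfolding formula_gen_def by blast
  have "node_ok E P' S y" if "E y S" for y
  proof -
    have "node_ok E P S y" using S(2) that by blast
    then show ?thesis by (rule node_ok_cases) (simp_all add: m)
  qed
  then show ?thesis unfolding formula_gen_def using S(1) by blast
qed

lemma LZF_formula: "is_LZF E \<phi> \<Longrightarrow> is_formula E \<phi>"
  unfolding is_LZF_def is_formula_def
  by (erule fg_mono) (auto simp: is_var_term_def is_term_def)

lemma repl_sentence:
  assumes f: "is_formula E (repl_inst E \<phi> x y z u v w)"
    and nat: "is_nat E x" "is_nat E y" "is_nat E z" "is_nat E u" "is_nat E v" "is_nat E w"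
    and fw: "free_within E \<phi> (union2 E (upair E x y) (upair E z z))"
  shows "is_sentence E (repl_inst E \<phi> x y z u v w)"
proof -
  have fwm: "free_within E \<phi> B" if "E x B" "E y B" "E z B" for B
    by (rule fw_mono[OF fw]) (use that in auto)
  have "free_within E (repl_inst E \<phi> x y z u v w) (emp E)"
    unfolding repl_inst_def
    by (intro fwI_FAll fwI_FImp fwI_FEx fwI_FAnd fwI_FIff fwI_FEq fwI_FMem tb_Var fwm; simp)
  then show ?thesis unfolding is_sentence_def using f by simp
qed

end

context gbt begin

lemma sem_unique:
  assumes inD: "in_Depth E k (FAll E u (FImp E (FEx E y (FAnd E (FEq E (Var E y) (Var E u)) \<psi>)) (FEq E (Var E u) (Const E b))))"
    and f: "is_formula E \<psi>" and n: "is_nat E u" "is_nat E y" and uy: "u \<noteq> y"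
    and fw: "free_within E \<psi> B" and uB: "\<not> E u B"
  shows "C (FAll E u (FImp E (FEx E y (FAnd E (FEq E (Var E y) (Var E u)) \<psi>)) (FEq E (Var E u) (Const E b)))) T
     \<longleftrightarrow> (\<forall>e. C (sb \<psi> y e) T \<longrightarrow> e = b)"
proof -
  have yu: "y \<noteq> u" using uy by simp
  have vac: "sb \<psi> u e = \<psi>" for e using sb_id[OF fw uB] .
  have comp: "sb (FImp E (FEx E y (FAnd E (FEq E (Var E y) (Var E u)) \<psi>)) (FEq E (Var E u) (Const E b))) u e
     = FImp E (FEx E y (FAnd E (FEq E (Var E y) (Const E e)) \<psi>)) (FEq E (Const E e) (Const E b))" for e
    using f n uy yu vac by simp
  have step: "C (sb (FImp E (FEx E y (FAnd E (FEq E (Var E y) (Var E u)) \<psi>)) (FEq E (Var E u) (Const E b))) u e) T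
     \<longleftrightarrow> (C (sb \<psi> y e) T \<longrightarrow> e = b)" for e
  proof -
    have i1: "in_Depth E k (FImp E (FEx E y (FAnd E (FEq E (Var E y) (Const E e)) \<psi>)) (FEq E (Const E e) (Const E b)))"
      using inD_FAll[OF inD, of e] comp by simp
    have i2: "in_Depth E k (FEx E y (FAnd E (FEq E (Var E y) (Const E e)) \<psi>))"
      and i3: "in_Depth E k (FEq E (Const E e) (Const E b))" using inD_FImp[OF i1] by simp_all
    have c4: "sb (FAnd E (FEq E (Var E y) (Const E e)) \<psi>) y b' = FAnd E (FEq E (Const E b') (Const E e)) (sb \<psi> y b')" for b'
      using f n by simp
    have i4: "in_Depth E k (FAnd E (FEq E (Const E b') (Const E e)) (sb \<psi> y b'))" for b'
      using inD_FEx[OF i2, of b'] c4 by simp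
    have "C (FEx E y (FAnd E (FEq E (Var E y) (Const E e)) \<psi>)) T \<longleftrightarrow> (\<exists>b'. C (FAnd E (FEq E (Const E b') (Const E e)) (sb \<psi> y b')) T)"
      using tc_FEx[OF i2] c4 by simp
    also have "\<dots> \<longleftrightarrow> (\<exists>b'. b' = e \<and> C (sb \<psi> y b') T)"
    proof -
      have "C (FAnd E (FEq E (Const E b') (Const E e)) (sb \<psi> y b')) T \<longleftrightarrow> b' = e \<and> C (sb \<psi> y b') T" for b'
        using tc_FAnd[OF i4] tc_FEq inD_FAnd[OF i4] by simp
      then show ?thesis by simp
    qed
    finally have "C (FEx E y (FAnd E (FEq E (Var E y) (Const E e)) \<psi>)) T \<longleftrightarrow> C (sb \<psi> y e) T" by simp
    then show ?thesis using comp tc_FImp[OF i1] tc_FEq[OF i3] by simp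
  qed
  show ?thesis using tc_FAll[OF inD] step by simp
qed


lemma sem_left:
  assumes inD: "in_Depth E k (FAll E x (FEx E y (FAnd E \<psi> (FAll E u (FImp E (FEx E y (FAnd E (FEq E (Var E y) (Var E u)) \<psi>)) (FEq E (Var E u) (Var E y)))))))"
    and f: "is_formula E \<psi>" and n: "is_nat E x" "is_nat E y" "is_nat E u"
    and d: "x \<noteq> y" "x \<noteq> u" "y \<noteq> u"
    and fw: "free_within E \<psi> B" and uB: "\<not> E u B"
  shows "C (FAll E x (FEx E y (FAnd E \<psi> (FAll E u (FImp E (FEx E y (FAnd E (FEq E (Var E y) (Var E u)) \<psi>)) (FEq E (Var E u) (Var E y))))))) T
     \<longleftrightarrow> (\<forall>a. \<exists>b. C (sb (sb \<psi> x a) y b) T \<and> (\<forall>e. C (sb (sb \<psi> x a) y e) T \<longrightarrow> e = b))"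
proof -
  have d': "y \<noteq> x" "u \<noteq> x" "u \<noteq> y" using d by auto
  have step: "C (sb (FEx E y (FAnd E \<psi> (FAll E u (FImp E (FEx E y (FAnd E (FEq E (Var E y) (Var E u)) \<psi>)) (FEq E (Var E u) (Var E y)))))) x a) T
     \<longleftrightarrow> (\<exists>b. C (sb (sb \<psi> x a) y b) T \<and> (\<forall>e. C (sb (sb \<psi> x a) y e) T \<longrightarrow> e = b))" for a
  proof -
    define \<psi>2 where "\<psi>2 = sb \<psi> x a"
    have f2: "is_formula E \<psi>2" using f unfolding \<psi>2_def by simp
    have fw2: "free_within E \<psi>2 (diff B x)" unfolding \<psi>2_def using sb_free[OF fw f] .
    have uB2: "\<not> E u (diff B x)" using uB by simp
    have c1: "sb (FEx E y (FAnd E \<psi> (FAll E u (FImp E (FEx E y (FAnd E (FEq E (Var E y) (Var E u)) \<psi>)) (FEq E (Var E u) (Var E y)))))) x a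
      = FEx E y (FAnd E \<psi>2 (FAll E u (FImp E (FEx E y (FAnd E (FEq E (Var E y) (Var E u)) \<psi>2)) (FEq E (Var E u) (Var E y)))))"
      unfolding \<psi>2_def using f n d d' by simp
    have i1: "in_Depth E k (FEx E y (FAnd E \<psi>2 (FAll E u (FImp E (FEx E y (FAnd E (FEq E (Var E y) (Var E u)) \<psi>2)) (FEq E (Var E u) (Var E y))))))"
      using inD_FAll[OF inD, of a] c1 by simp
    have c2: "sb (FAnd E \<psi>2 (FAll E u (FImp E (FEx E y (FAnd E (FEq E (Var E y) (Var E u)) \<psi>2)) (FEq E (Var E u) (Var E y))))) y b
      = FAnd E (sb \<psi>2 y b) (FAll E u (FImp E (FEx E y (FAnd E (FEq E (Var E y) (Var E u)) \<psi>2)) (FEq E (Var E u) (Const E b))))" for b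
      using f2 n d d' by simp
    have i2: "in_Depth E k (FAnd E (sb \<psi>2 y b) (FAll E u (FImp E (FEx E y (FAnd E (FEq E (Var E y) (Var E u)) \<psi>2)) (FEq E (Var E u) (Const E b)))))" for b
      using inD_FEx[OF i1, of b] c2 by simp
    have "C (FAnd E (sb \<psi>2 y b) (FAll E u (FImp E (FEx E y (FAnd E (FEq E (Var E y) (Var E u)) \<psi>2)) (FEq E (Var E u) (Const E b))))) T
      \<longleftrightarrow> C (sb \<psi>2 y b) T \<and> (\<forall>e. C (sb \<psi>2 y e) T \<longrightarrow> e = b)" for b
      using tc_FAnd[OF i2] sem_unique[OF conjunct2[OF inD_FAnd[OF i2]] f2 n(3) n(2) d'(3) fw2 uB2] by simp
    then show ?thesis using c1 tc_FEx[OF i1] c2 unfolding \<psi>2_def by simp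
  qed
  show ?thesis using tc_FAll[OF inD] step by simp
qed


lemma sem_right:
  assumes inD: "in_Depth E k (FAll E v (FEx E w (FAll E y (FIff E (FMem E (Var E y) (Var E w)) (FEx E x (FAnd E (FMem E (Var E x) (Var E v)) \<psi>))))))"
    and f: "is_formula E \<psi>" and n: "is_nat E x" "is_nat E y" "is_nat E v" "is_nat E w"
    and d: "x \<noteq> y" "x \<noteq> v" "x \<noteq> w" "y \<noteq> v" "y \<noteq> w" "v \<noteq> w"
    and fw: "free_within E \<psi> B" and vB: "\<not> E v B" and wB: "\<not> E w B"
  shows "C (FAll E v (FEx E w (FAll E y (FIff E (FMem E (Var E y) (Var E w)) (FEx E x (FAnd E (FMem E (Var E x) (Var E v)) \<psi>)))))) T
     \<longleftrightarrow> (\<forall>e. \<exists>f. \<forall>b. E b f \<longleftrightarrow> (\<exists>a. E a e \<and> C (sb (sb \<psi> y b) x a) T))"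
proof -
  have d': "y \<noteq> x" "v \<noteq> x" "w \<noteq> x" "v \<noteq> y" "w \<noteq> y" "w \<noteq> v" using d by auto
  have vacv: "sb \<psi> v e = \<psi>" for e using sb_id[OF fw vB] .
  have vacw: "sb \<psi> w e = \<psi>" for e using sb_id[OF fw wB] .
  have step: "C (sb (FEx E w (FAll E y (FIff E (FMem E (Var E y) (Var E w)) (FEx E x (FAnd E (FMem E (Var E x) (Var E v)) \<psi>))))) v e) T
     \<longleftrightarrow> (\<exists>f. \<forall>b. E b f \<longleftrightarrow> (\<exists>a. E a e \<and> C (sb (sb \<psi> y b) x a) T))" for e
  proof -
    have c1: "sb (FEx E w (FAll E y (FIff E (FMem E (Var E y) (Var E w)) (FEx E x (FAnd E (FMem E (Var E x) (Var E v)) \<psi>))))) v e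
       = FEx E w (FAll E y (FIff E (FMem E (Var E y) (Var E w)) (FEx E x (FAnd E (FMem E (Var E x) (Const E e)) \<psi>))))"
      using f n d d' vacv by simp
    have i1: "in_Depth E k (FEx E w (FAll E y (FIff E (FMem E (Var E y) (Var E w)) (FEx E x (FAnd E (FMem E (Var E x) (Const E e)) \<psi>)))))"
      using inD_FAll[OF inD, of e] c1 by simp
    have stepf: "C (sb (FAll E y (FIff E (FMem E (Var E y) (Var E w)) (FEx E x (FAnd E (FMem E (Var E x) (Const E e)) \<psi>)))) w f) T
      \<longleftrightarrow> (\<forall>b. E b f \<longleftrightarrow> (\<exists>a. E a e \<and> C (sb (sb \<psi> y b) x a) T))" for f
    proof -
      have c2: "sb (FAll E y (FIff E (FMem E (Var E y) (Var E w)) (FEx E x (FAnd E (FMem E (Var E x) (Const E e)) \<psi>)))) w f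
        = FAll E y (FIff E (FMem E (Var E y) (Const E f)) (FEx E x (FAnd E (FMem E (Var E x) (Const E e)) \<psi>)))"
        using f n d d' vacw by simp
      have i2: "in_Depth E k (FAll E y (FIff E (FMem E (Var E y) (Const E f)) (FEx E x (FAnd E (FMem E (Var E x) (Const E e)) \<psi>))))"
        using inD_FEx[OF i1, of f] c2 by simp
      have stepb: "C (sb (FIff E (FMem E (Var E y) (Const E f)) (FEx E x (FAnd E (FMem E (Var E x) (Const E e)) \<psi>))) y b) T
        \<longleftrightarrow> (E b f \<longleftrightarrow> (\<exists>a. E a e \<and> C (sb (sb \<psi> y b) x a) T))" for b
      proof -
        have c3: "sb (FIff E (FMem E (Var E y) (Const E f)) (FEx E x (FAnd E (FMem E (Var E x) (Const E e)) \<psi>))) y b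
          = FIff E (FMem E (Const E b) (Const E f)) (FEx E x (FAnd E (FMem E (Var E x) (Const E e)) (sb \<psi> y b)))"
          using f n d d' by simp
        have i3: "in_Depth E k (FIff E (FMem E (Const E b) (Const E f)) (FEx E x (FAnd E (FMem E (Var E x) (Const E e)) (sb \<psi> y b))))"
          using inD_FAll[OF i2, of b] c3 by simp
        have i4: "in_Depth E k (FMem E (Const E b) (Const E f))"
          and i5: "in_Depth E k (FEx E x (FAnd E (FMem E (Var E x) (Const E e)) (sb \<psi> y b)))"
          using inD_FIff[OF i3] by simp_all
        have fb: "is_formula E (sb \<psi> y b)" using f by simp
        have c6: "sb (FAnd E (FMem E (Var E x) (Const E e)) (sb \<psi> y b)) x a = FAnd E (FMem E (Const E a) (Const E e)) (sb (sb \<psi> y b) x a)" for a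
          using fb n by simp
        have i6: "in_Depth E k (FAnd E (FMem E (Const E a) (Const E e)) (sb (sb \<psi> y b) x a))" for a
          using inD_FEx[OF i5, of a] c6 by simp
        have "C (FAnd E (FMem E (Const E a) (Const E e)) (sb (sb \<psi> y b) x a)) T \<longleftrightarrow> E a e \<and> C (sb (sb \<psi> y b) x a) T" for a
          using tc_FAnd[OF i6] tc_FMem inD_FAnd[OF i6] by simp
        then have "C (FEx E x (FAnd E (FMem E (Var E x) (Const E e)) (sb \<psi> y b))) T \<longleftrightarrow> (\<exists>a. E a e \<and> C (sb (sb \<psi> y b) x a) T)"
          using tc_FEx[OF i5] c6 by simp
        then show ?thesis using c3 tc_FIff[OF i3] tc_FMem[OF i4] by simp
      qed
      show ?thesis using c2 tc_FAll[OF i2] stepb by simp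
    qed
    show ?thesis using c1 tc_FEx[OF i1] stepf by simp
  qed
  show ?thesis using tc_FAll[OF inD] step by simp
qed


lemma repl_class:
  assumes f: "is_formula E \<phi>1"
  shows "\<exists>X. \<forall>p. C p X \<longleftrightarrow> (\<exists>a b. p = opair E a b \<and> C (sb (sb \<phi>1 x a) y b) T)"
proof -
  obtain X1 where X1: "\<forall>w. C w X1 \<longleftrightarrow> (\<exists>a q y. w = opair E a (opair E q y) \<and> is_subst E q x a y)"
    using SUB_class by blast
  obtain X2 where X2: "\<forall>w. C w X2 \<longleftrightarrow> (\<exists>a q y'. w = opair E a (opair E q y') \<and> is_subst E q y a y')"
    using SUB_class by blast
  have s1: "is_subst E \<phi>1 x a y1 \<longleftrightarrow> y1 = sb \<phi>1 x a" for a y1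
    using sb_eq sb_is f unfolding is_formula_def by metis
  have s2: "is_subst E (sb \<phi>1 x a) y b y2 \<longleftrightarrow> y2 = sb (sb \<phi>1 x a) y b" for a b y2
  proof -
    have "is_formula E (sb \<phi>1 x a)" using f by simp
    then show ?thesis using sb_eq sb_is unfolding is_formula_def by metis
  qed
  define P where "P p \<longleftrightarrow> (\<exists>a b y1 y2. p = opair E a b \<and> C (opair E a (opair E \<phi>1 y1)) X1 \<and>
      C (opair E b (opair E y1 y2)) X2 \<and> C y2 T)" for p
  have dP: "defbl C P"
  proof (rule defblI[where s="(\<lambda>_. undefined)(1 := \<phi>1)" and c="(\<lambda>_. undefined)(0 := X1, 1 := X2, 2 := T)"
        and p="NEx 2 (NEx 3 (NEx 4 (NEx 5 (NAnd (NOP 0 2 3) (NAnd (NEx 6 (NAnd (NOP 6 1 4) (NEx 7 (NAnd (NOP 7 2 6) (NIn 7 0))))) (NAnd (NEx 8 (NAnd (NOP 8 4 5) (NEx 9 (NAnd (NOP 9 3 8) (NIn 9 1))))) (NIn 5 2)))))))"])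
    fix p show "P p = nsat E C (((\<lambda>_. undefined)(1 := \<phi>1))(0 := p)) ((\<lambda>_. undefined)(0 := X1, 1 := X2, 2 := T))
       (NEx 2 (NEx 3 (NEx 4 (NEx 5 (NAnd (NOP 0 2 3) (NAnd (NEx 6 (NAnd (NOP 6 1 4) (NEx 7 (NAnd (NOP 7 2 6) (NIn 7 0))))) (NAnd (NEx 8 (NAnd (NOP 8 4 5) (NEx 9 (NAnd (NOP 9 3 8) (NIn 9 1))))) (NIn 5 2))))))))"
      unfolding P_def by auto
  qed
  then obtain X where X: "\<forall>p. C p X \<longleftrightarrow> P p" unfolding defbl_def by blast
  have "P p \<longleftrightarrow> (\<exists>a b. p = opair E a b \<and> C (sb (sb \<phi>1 x a) y b) T)" for p
  proof -
    have "C (opair E a (opair E \<phi>1 y1)) X1 \<longleftrightarrow> y1 = sb \<phi>1 x a" for a y1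
      using X1 s1 by simp
    moreover have "y1 = sb \<phi>1 x a \<Longrightarrow> C (opair E b (opair E y1 y2)) X2 \<longleftrightarrow> y2 = sb (sb \<phi>1 x a) y b" for a b y1 y2
      using X2 s2 by simp
    ultimately show ?thesis unfolding P_def by auto
  qed
  then show ?thesis using X by blast
qed

lemma repl_true:
  assumes LZF: "is_LZF E \<phi>"
    and n: "is_nat E x" "is_nat E y" "is_nat E z" "is_nat E u" "is_nat E v" "is_nat E w"
    and dist: "distinct [x, y, z, u, v, w]"
    and fw: "free_within E \<phi> (union2 E (upair E x y) (upair E z z))"
    and hd: "has_depth E (repl_inst E \<phi> x y z u v w) k"
  shows "is_sentence E (repl_inst E \<phi> x y z u v w) \<and> C (repl_inst E \<phi> x y z u v w) T"
proof -
  have d: "x \<noteq> y" "x \<noteq> z" "x \<noteq> u" "x \<noteq> v" "x \<noteq> w" "y \<noteq> z" "y \<noteq> u" "y \<noteq> v" "y \<noteq> w"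
     "z \<noteq> u" "z \<noteq> v" "z \<noteq> w" "u \<noteq> v" "u \<noteq> w" "v \<noteq> w" using dist by auto
  have d': "y \<noteq> x" "z \<noteq> x" "u \<noteq> x" "v \<noteq> x" "w \<noteq> x" "z \<noteq> y" "u \<noteq> y" "v \<noteq> y" "w \<noteq> y"
     "u \<noteq> z" "v \<noteq> z" "w \<noteq> z" "v \<noteq> u" "w \<noteq> u" "w \<noteq> v" using d by auto
  have f: "is_formula E \<phi>" using LZF_formula[OF LZF] .
  have sent: "is_sentence E (repl_inst E \<phi> x y z u v w)"
    using repl_sentence[OF _ n fw] hd unfolding has_depth_def by blast
  have inD: "in_Depth E k (repl_inst E \<phi> x y z u v w)"
    unfolding in_Depth_def using sent hd unfolding subset_def by blast
  define L where "L = FAll E x (FEx E y (FAnd E \<phi> (FAll E u (FImp E (FEx E y (FAnd E (FEq E (Var E y) (Var E u)) \<phi>)) (FEq E (Var E u) (Var E y))))))"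
  define R where "R = FAll E v (FEx E w (FAll E y (FIff E (FMem E (Var E y) (Var E w)) (FEx E x (FAnd E (FMem E (Var E x) (Var E v)) \<phi>)))))"
  have seq: "repl_inst E \<phi> x y z u v w = FAll E z (FImp E L R)" unfolding repl_inst_def L_def R_def ..
  have inD0: "in_Depth E k (FAll E z (FImp E L R))" using inD seq by simp
  have step: "C (sb (FImp E L R) z c) T" for c
  proof -
    define \<phi>1 where "\<phi>1 = sb \<phi> z c"
    have f1: "is_formula E \<phi>1" using f unfolding \<phi>1_def by simp
    have fw1: "free_within E \<phi>1 (diff (union2 E (upair E x y) (upair E z z)) z)"
      unfolding \<phi>1_def using sb_free[OF fw f] .
    have c0: "sb (FImp E L R) z c =
      FImp E (FAll E x (FEx E y (FAnd E \<phi>1 (FAll E u (FImp E (FEx E y (FAnd E (FEq E (Var E y) (Var E u)) \<phi>1)) (FEq E (Var E u) (Var E y)))))))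
             (FAll E v (FEx E w (FAll E y (FIff E (FMem E (Var E y) (Var E w)) (FEx E x (FAnd E (FMem E (Var E x) (Var E v)) \<phi>1))))))"
      unfolding L_def R_def \<phi>1_def using f n d d' by simp
    have i1: "in_Depth E k (FImp E (FAll E x (FEx E y (FAnd E \<phi>1 (FAll E u (FImp E (FEx E y (FAnd E (FEq E (Var E y) (Var E u)) \<phi>1)) (FEq E (Var E u) (Var E y)))))))
             (FAll E v (FEx E w (FAll E y (FIff E (FMem E (Var E y) (Var E w)) (FEx E x (FAnd E (FMem E (Var E x) (Var E v)) \<phi>1)))))))"
      using inD_FAll[OF inD0, of c] c0 by simp
    note iLR = inD_FImp[OF i1]
    have memB: "\<not> E u (diff (union2 E (upair E x y) (upair E z z)) z)"
      "\<not> E v (diff (union2 E (upair E x y) (upair E z z)) z)"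
      "\<not> E w (diff (union2 E (upair E x y) (upair E z z)) z)" using d' by auto
    have semL: "C (FAll E x (FEx E y (FAnd E \<phi>1 (FAll E u (FImp E (FEx E y (FAnd E (FEq E (Var E y) (Var E u)) \<phi>1)) (FEq E (Var E u) (Var E y))))))) T
      \<longleftrightarrow> (\<forall>a. \<exists>b. C (sb (sb \<phi>1 x a) y b) T \<and> (\<forall>e. C (sb (sb \<phi>1 x a) y e) T \<longrightarrow> e = b))"
      by (rule sem_left[OF conjunct1[OF iLR] f1 n(1) n(2) n(4) d(1) d(3) d(7) fw1 memB(1)])
    have semR: "C (FAll E v (FEx E w (FAll E y (FIff E (FMem E (Var E y) (Var E w)) (FEx E x (FAnd E (FMem E (Var E x) (Var E v)) \<phi>1)))))) T
      \<longleftrightarrow> (\<forall>e. \<exists>f. \<forall>b. E b f \<longleftrightarrow> (\<exists>a. E a e \<and> C (sb (sb \<phi>1 y b) x a) T))"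
      by (rule sem_right[OF conjunct2[OF iLR] f1 n(1) n(2) n(5) n(6) d(1) d(4) d(5) d(8) d(9) d(15) fw1 memB(2) memB(3)])
    have comm: "sb (sb \<phi>1 y b) x a = sb (sb \<phi>1 x a) y b" for a b
      using sb_comm[OF d'(1) f1] .
    have "\<forall>e. \<exists>f. \<forall>b. E b f \<longleftrightarrow> (\<exists>a. E a e \<and> C (sb (sb \<phi>1 x a) y b) T)"
      if Lh: "\<forall>a. \<exists>b. C (sb (sb \<phi>1 x a) y b) T \<and> (\<forall>e. C (sb (sb \<phi>1 x a) y e) T \<longrightarrow> e = b)"
    proof
      fix e
      obtain X where X: "\<forall>p. C p X \<longleftrightarrow> (\<exists>a b. p = opair E a b \<and> C (sb (sb \<phi>1 x a) y b) T)"
        using repl_class[OF f1] by blast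
      have fnc: "\<forall>a b b' p p'. is_opair E p a b \<and> is_opair E p' a b' \<and> C p X \<and> C p' X \<longrightarrow> b = b'"
      proof (intro allI impI)
        fix a b b' p p' assume h: "is_opair E p a b \<and> is_opair E p' a b' \<and> C p X \<and> C p' X"
        then have "C (sb (sb \<phi>1 x a) y b) T" "C (sb (sb \<phi>1 x a) y b') T" using X by auto
        then show "b = b'" using Lh by metis
      qed
      obtain f where "\<forall>b. E b f \<longleftrightarrow> (\<exists>a p. E a e \<and> is_opair E p a b \<and> C p X)"
        using repl_ax[OF fnc] by blast
      then have "\<forall>b. E b f \<longleftrightarrow> (\<exists>a. E a e \<and> C (sb (sb \<phi>1 x a) y b) T)" using X by auto
      then show "\<exists>f. \<forall>b. E b f \<longleftrightarrow> (\<exists>a. E a e \<and> C (sb (sb \<phi>1 x a) y b) T)" by blast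
    qed
    then have "C (FAll E x (FEx E y (FAnd E \<phi>1 (FAll E u (FImp E (FEx E y (FAnd E (FEq E (Var E y) (Var E u)) \<phi>1)) (FEq E (Var E u) (Var E y))))))) T
      \<longrightarrow> C (FAll E v (FEx E w (FAll E y (FIff E (FMem E (Var E y) (Var E w)) (FEx E x (FAnd E (FMem E (Var E x) (Var E v)) \<phi>1)))))) T"
      unfolding semL semR comm by blast
    then show ?thesis using c0 tc_FImp[OF i1] by simp
  qed
  have "C (FAll E z (FImp E L R)) T" using tc_FAll[OF inD0] step by blast
  then show ?thesis using sent seq by simp
qed

end

theorem lemma3p12:
  fixes E :: "'s \<Rightarrow> 's \<Rightarrow> bool" and C :: "'s \<Rightarrow> 'c \<Rightarrow> bool"
  assumes "GB_plus E C \<or> GB_minus E C"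
    and "is_repl_instance E \<sigma>"
    and "has_depth E \<sigma> d"
    and "C_Most E C d"
  shows "T_Most E C \<sigma>"
proof -
  have gb: "GB_base E C" using assms(1) unfolding GB_plus_def GB_minus_def by blast
  obtain T where nd: "is_nat E d" and tcT: "truth_class E C T d"
    using assms(4) unfolding C_Most_def by blast
  interpret gbt E C T d by (rule gbt.intro[OF gbm.intro[OF gb] gbt_axioms.intro[OF tcT]])
  obtain \<phi> x y z u v w where LZF: "is_LZF E \<phi>" and n: "is_nat E x" "is_nat E y" "is_nat E z" "is_nat E u" "is_nat E v" "is_nat E w"
    and dist: "distinct [x, y, z, u, v, w]"
    and fw: "free_within E \<phi> (union2 E (upair E x y) (upair E z z))"
    and s: "\<sigma> = repl_inst E \<phi> x y z u v w"
    using assms(2) unfolding is_repl_instance_def by blast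
  have "is_sentence E \<sigma> \<and> C \<sigma> T"
    using repl_true[OF LZF n dist fw] assms(3) s by simp
  moreover have "Defs.subset E d d" unfolding subset_def by blast
  ultimately show ?thesis unfolding T_Most_def using assms(3) nd tcT by blast
qed


end
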